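(* In the setting below, the intrinsic angular momentum of the cluster satisfies, as $t\nearrow T$, $$\mu^0_{\mathcal G}(t)=O(|T-t|^{7/3}),\qquad \dot\mu^0_{\mathcal G}(t)=O(|T-t|^{4/3}).$$
   Context: Setting: let $d\in\{2,3\}$, $n\ge2$, masses $m_1,\dots,m_n>0$, and let $q(t)=(q_1(t),\dots,q_n(t))$, $q_i(t)\in\mathbb{R}^d$, be a solution on $[t_0,T)$ of $m_i\ddot q_i=\partial U/\partial q_i$, $U(q)=\sum_{i<j}m_im_j/|q_i-q_j|$, with $q_i(t)\ne q_j(t)$ for $i\ne j$, $t<T$, such that every limit $L_i=\lim_{t\nearrow T}q_i(t)$ exists. Let $\mathcal G\subset\{1,\dots,n\}$ be a cluster with at least two elements: $L_i=L_j=:L_{\mathcal G}$ for $i,j\in\mathcal G$ and $L_j\neq L_{\mathcal G}$ for $j\notin\mathcal G$. $c_{\mathcal G}=(\sum_{i\in\mathcal G}m_i)^{-1}\sum_{i\in\mathcal G}m_iq_i$ and $\mu^0_{\mathcal G}=\sum_{i\in\mathcal G}m_i(q_i-c_{\mathcal G})\times(\dot q_i-\dot c_{\mathcal G})$, where for $d=2$, $a\times b=a_1b_2-a_2b_1$ and for $d=3$ it is the vector product. *)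

theory Defs
  imports "HOL-Analysis.Analysis" "HOL-Library.Landau_Symbols"
begin

text \<open>Planar cross product (d = 2): a scalar. For d = 3 we use the library's cross3.\<close>
definition cross2 :: "real^2 \<Rightarrow> real^2 \<Rightarrow> real" where
  "cross2 a b = a$1 * b$2 - a$2 * b$1"

definition nbU :: "nat \<Rightarrow> (nat \<Rightarrow> real) \<Rightarrow> (nat \<Rightarrow> 'a::real_normed_vector) \<Rightarrow> real" where
  "nbU n m x = (\<Sum>i\<in>{1..n}. \<Sum>j\<in>{i<..n}. m i * m j / dist (x i) (x j))"

text \<open>The setting: q is a collision-free solution on [t0,T) of m_i q_i'' = dU/dq_i with
  velocity qd, all limits L_i exist as t tends to T from the left, and G is a cluster
  with at least two elements.\<close>
definition nb_cluster_setting ::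
  "nat \<Rightarrow> (nat \<Rightarrow> real) \<Rightarrow> real \<Rightarrow> real \<Rightarrow> (real \<Rightarrow> nat \<Rightarrow> 'a::euclidean_space)
    \<Rightarrow> (real \<Rightarrow> nat \<Rightarrow> 'a) \<Rightarrow> nat set \<Rightarrow> bool" where
  "nb_cluster_setting n m t0 T q qd G \<longleftrightarrow>
     n \<ge> 2 \<and> (\<forall>i\<in>{1..n}. m i > 0) \<and> t0 < T \<and>
     (\<forall>t\<in>{t0..<T}. \<forall>i\<in>{1..n}. \<forall>j\<in>{1..n}. i \<noteq> j \<longrightarrow> q t i \<noteq> q t j) \<and>
     (\<exists>qdd. \<forall>t\<in>{t0..<T}. \<forall>i\<in>{1..n}.
        ((\<lambda>s. q s i) has_vector_derivative qd t i) (at t within {t0..<T}) \<and>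
        ((\<lambda>s. qd s i) has_vector_derivative qdd t i) (at t within {t0..<T}) \<and>
        ((\<lambda>x. nbU n m ((q t)(i := x))) has_derivative (\<lambda>h. (m i *\<^sub>R qdd t i) \<bullet> h))
           (at (q t i))) \<and>
     (\<forall>i\<in>{1..n}. \<exists>L. ((\<lambda>t. q t i) \<longlongrightarrow> L) (at_left T)) \<and>
     G \<subseteq> {1..n} \<and> card G \<ge> 2 \<and>
     (\<exists>LG. (\<forall>i\<in>G. ((\<lambda>t. q t i) \<longlongrightarrow> LG) (at_left T)) \<and>
           (\<forall>j\<in>{1..n} - G. \<not> ((\<lambda>t. q t j) \<longlongrightarrow> LG) (at_left T)))"

definition cmass :: "(nat \<Rightarrow> real) \<Rightarrow> nat set \<Rightarrow> (nat \<Rightarrow> 'a::real_vector) \<Rightarrow> 'a" where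
  "cmass m G x = (1 / (\<Sum>i\<in>G. m i)) *\<^sub>R (\<Sum>i\<in>G. m i *\<^sub>R x i)"

definition ang_mom0 ::
  "('a \<Rightarrow> 'a \<Rightarrow> 'b::real_vector) \<Rightarrow> (nat \<Rightarrow> real) \<Rightarrow> nat set
    \<Rightarrow> (real \<Rightarrow> nat \<Rightarrow> 'a::real_vector) \<Rightarrow> (real \<Rightarrow> nat \<Rightarrow> 'a) \<Rightarrow> real \<Rightarrow> 'b" where
  "ang_mom0 cr m G q qd t =
     (\<Sum>i\<in>G. m i *\<^sub>R cr (q t i - cmass m G (q t)) (qd t i - cmass m G (qd t)))"

end

theory Submission
  imports Defs
begin


lemma ode_phi_mono:
  fixes J J1 J2 :: "real \<Rightarrow> real"
  assumes d1: "\<And>t. t\<in>{a<..<b} \<Longrightarrow> (J has_real_derivative J1 t) (at t)"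
    and d2: "\<And>t. t\<in>{a<..<b} \<Longrightarrow> (J1 has_real_derivative J2 t) (at t)"
    and pos: "\<And>t. t\<in>{a<..<b} \<Longrightarrow> J t > 0"
    and neg: "\<And>t. t\<in>{a<..<b} \<Longrightarrow> J1 t \<le> 0"
    and ineq: "\<And>t. t\<in>{a<..<b} \<Longrightarrow> 2 * J t * J2 t - J1 t ^ 2 / 2 \<ge> e - c * J t"
    and c: "c \<ge> 0" and st: "a < s" "s \<le> t" "t < b"
  shows "(J1 t ^ 2 + 2 * e) / sqrt (J t) + 2 * c * sqrt (J t)
       \<le> (J1 s ^ 2 + 2 * e) / sqrt (J s) + 2 * c * sqrt (J s)"
proof -
  define \<Phi> where "\<Phi> x = (J1 x ^ 2 + 2 * e) / sqrt (J x) + 2 * c * sqrt (J x)" for x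
  have D: "(\<Phi> has_real_derivative
     ((2 * J1 x * J2 x) * sqrt (J x) - (J1 x ^ 2 + 2 * e) * (J1 x / (2 * sqrt (J x)))) / (sqrt (J x) * sqrt (J x))
        + 2 * c * (J1 x / (2 * sqrt (J x)))) (at x)" if x: "x \<in> {a<..<b}" for x
  proof -
    have Jx: "J x > 0" using pos x by auto
    have sq: "((\<lambda>y. sqrt (J y)) has_real_derivative J1 x / (2 * sqrt (J x))) (at x)"
      using DERIV_chain2[OF DERIV_real_sqrt[OF Jx] d1[OF x]] by (simp add: field_simps)
    have p: "((\<lambda>y. J1 y ^ 2 + 2 * e) has_real_derivative 2 * J1 x * J2 x) (at x)"
      using d2[OF x] by (auto intro!: derivative_eq_intros)
    have "((\<lambda>y. (J1 y ^ 2 + 2 * e) / sqrt (J y)) has_real_derivative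
       ((2 * J1 x * J2 x) * sqrt (J x) - (J1 x ^ 2 + 2 * e) * (J1 x / (2 * sqrt (J x)))) / (sqrt (J x) * sqrt (J x))) (at x)"
      by (rule DERIV_divide[OF p sq]) (use Jx in simp)
    moreover have "((\<lambda>y. 2 * c * sqrt (J y)) has_real_derivative 2 * c * (J1 x / (2 * sqrt (J x)))) (at x)"
      by (rule DERIV_cmult[OF sq])
    ultimately show ?thesis
      unfolding \<Phi>_def by (rule DERIV_add)
  qed
  have nonpos: "((2 * J1 x * J2 x) * sqrt (J x) - (J1 x ^ 2 + 2 * e) * (J1 x / (2 * sqrt (J x)))) / (sqrt (J x) * sqrt (J x))
        + 2 * c * (J1 x / (2 * sqrt (J x))) \<le> 0" if x: "x \<in> {a<..<b}" for x
  proof -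
    have Jx: "J x > 0" using pos x by auto
    define r where "r = sqrt (J x)"
    have r: "r > 0" "r^2 = J x" using Jx by (auto simp: r_def)
    have X: "2 * J x * J2 x - J1 x ^ 2 / 2 - e + c * J x \<ge> 0" using ineq[OF x] by linarith
    have eq: "((2 * J1 x * J2 x) * r - (J1 x ^ 2 + 2 * e) * (J1 x / (2 * r))) / (r * r)
        + 2 * c * (J1 x / (2 * r)) = J1 x * (2 * J x * J2 x - J1 x ^ 2 / 2 - e + c * J x) / (r^3)"
      unfolding r(2)[symmetric] using r(1) by (simp add: field_simps power2_eq_square power3_eq_cube)
    have "J1 x * (2 * J x * J2 x - J1 x ^ 2 / 2 - e + c * J x) / (r^3) \<le> 0"
      using neg[OF x] X r by (intro divide_nonpos_pos mult_nonpos_nonneg) auto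
    then show ?thesis using eq by (simp add: r_def)
  qed
  have "\<Phi> s \<ge> \<Phi> t"
  proof (rule DERIV_nonpos_imp_decreasing_open[OF st(2)])
    fix x assume "s < x" "x < t"
    then have x: "x \<in> {a<..<b}" using st by auto
    show "\<exists>y. (\<Phi> has_real_derivative y) (at x) \<and> y \<le> 0"
      using D[OF x] nonpos[OF x] by blast
  next
    show "continuous_on {s..t} \<Phi>"
    proof (intro continuous_at_imp_continuous_on ballI)
      fix x assume "x \<in> {s..t}"
      then have "x \<in> {a<..<b}" using st by auto
      from D[OF this] show "isCont \<Phi> x" by (rule DERIV_isCont)
    qed
  qed
  then show ?thesis by (simp add: \<Phi>_def)
qed

lemma mono_from_deriv:
  fixes f f' :: "real \<Rightarrow> real"
  assumes "\<And>x. x \<in> {s..t} \<Longrightarrow> (f has_real_derivative f' x) (at x)"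
    and "\<And>x. x \<in> {s<..<t} \<Longrightarrow> f' x \<ge> 0"
    and "s \<le> t"
  shows "f s \<le> f t"
proof (rule DERIV_nonneg_imp_increasing_open[OF assms(3)])
  fix x assume "s < x" "x < t"
  then have "x \<in> {s..t}" "x \<in> {s<..<t}" by auto
  then show "\<exists>y. (f has_real_derivative y) (at x) \<and> 0 \<le> y" using assms(1,2) by blast
next
  show "continuous_on {s..t} f"
  proof (intro continuous_at_imp_continuous_on ballI)
    fix x assume "x \<in> {s..t}"
    from assms(1)[OF this] show "isCont f x" by (rule DERIV_isCont)
  qed
qed

lemma conv_decreasing:
  fixes J J1 J2 :: "real \<Rightarrow> real"
  assumes d1: "\<And>t. t\<in>{a<..<b} \<Longrightarrow> (J has_real_derivative J1 t) (at t)"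
    and d2: "\<And>t. t\<in>{a<..<b} \<Longrightarrow> (J1 has_real_derivative J2 t) (at t)"
    and pos: "\<And>t. t\<in>{a<..<b} \<Longrightarrow> J t > 0"
    and cv: "\<And>t. t\<in>{a<..<b} \<Longrightarrow> J2 t \<ge> 0"
    and lim: "(J \<longlongrightarrow> 0) (at_left b)"
    and t: "t \<in> {a<..<b}"
  shows "J1 t \<le> 0"
proof (rule ccontr)
  assume "\<not> J1 t \<le> 0"
  then have J1t: "J1 t > 0" by simp
  have "J t \<le> J x" if x: "x \<in> {t..<b}" for x
  proof (rule mono_from_deriv[where f=J and f'=J1])
    fix y assume y: "y \<in> {t<..<x}"
    have "J1 t \<le> J1 y"
      by (rule mono_from_deriv[where f=J1 and f'=J2]) (use t x y in \<open>auto intro!: d2 cv\<close>)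
    then show "J1 y \<ge> 0" using J1t by simp
  qed (use t x in \<open>auto intro!: d1\<close>)
  moreover have "eventually (\<lambda>x. x \<in> {t<..<b}) (at_left b)"
    using t by (intro eventually_at_left_real) auto
  ultimately have ev: "eventually (\<lambda>x. J t \<le> J x) (at_left b)"
    by (auto elim!: eventually_mono)
  have "J t \<le> 0"
    by (rule tendsto_lowerbound[OF lim ev]) simp
  then show False using pos[OF t] by simp
qed

lemma rate_lemma:
  fixes J J1 :: "real \<Rightarrow> real"
  assumes d1: "\<And>t. t\<in>{s<..<b} \<Longrightarrow> (J has_real_derivative J1 t) (at t)"
    and pos: "\<And>t. t\<in>{s<..<b} \<Longrightarrow> J t > 0"
    and neg: "\<And>t. t\<in>{s<..<b} \<Longrightarrow> J1 t \<le> 0"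
    and bd: "\<And>t. t\<in>{s<..<b} \<Longrightarrow> J1 t ^ 2 \<le> B * sqrt (J t)"
    and lim: "(J \<longlongrightarrow> 0) (at_left b)"
    and t: "t \<in> {s<..<b}"
  shows "J t \<le> (3/4 * sqrt B * (b - t)) powr (4/3)"
proof -
  define k where "k = 3/4 * sqrt B"
  define \<psi> where "\<psi> x = J x powr (3/4) + k * x" for x
  have B: "B \<ge> 0"
  proof -
    have "0 \<le> J1 t ^ 2" by simp
    also have "\<dots> \<le> B * sqrt (J t)" using bd[OF t] .
    finally show ?thesis using pos[OF t] by (simp add: zero_le_mult_iff)
  qed
  have D: "(\<psi> has_real_derivative (3/4) * J x powr (3/4 - 1) * J1 x + k) (at x)" if x: "x\<in>{s<..<b}" for x
    unfolding \<psi>_def using d1[OF x] pos[OF x] by (auto intro!: derivative_eq_intros)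
  have Dnn: "(3/4) * J x powr (3/4 - 1) * J1 x + k \<ge> 0" if x: "x\<in>{s<..<b}" for x
  proof -
    have Jx: "J x > 0" using pos[OF x] by auto
    have s4: "sqrt (sqrt (J x)) = J x powr (1/4)"
      using Jx by (simp add: powr_half_sqrt[symmetric] powr_powr)
    have "\<bar>J1 x\<bar> = sqrt (J1 x ^ 2)" by simp
    also have "\<dots> \<le> sqrt (B * sqrt (J x))" using bd[OF x] by (rule real_sqrt_le_mono)
    also have "\<dots> = sqrt B * J x powr (1/4)" by (simp add: real_sqrt_mult s4)
    finally have a: "- J1 x \<le> sqrt B * J x powr (1/4)" by simp
    have "J x powr (3/4 - 1) * (- J1 x) \<le> J x powr (3/4 - 1) * (sqrt B * J x powr (1/4))"
      using a by (intro mult_left_mono) auto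
    also have "\<dots> = sqrt B * (J x powr (3/4 - 1) * J x powr (1/4))" by simp
    also have "J x powr (3/4 - 1) * J x powr (1/4) = 1"
      using Jx by (simp add: powr_add[symmetric])
    finally have "J x powr (3/4 - 1) * (- J1 x) \<le> sqrt B" by simp
    then show ?thesis unfolding k_def by (simp add: algebra_simps)
  qed
  have le: "\<psi> t \<le> \<psi> y" if y: "y \<in> {t..<b}" for y
    by (rule mono_from_deriv[where f=\<psi>, OF D Dnn]) (use t y in auto)
  have evs: "eventually (\<lambda>x. x \<in> {s<..<b}) (at_left b)"
    using t by (intro eventually_at_left_real) auto
  have evt: "eventually (\<lambda>x. x \<in> {t<..<b}) (at_left b)"
    using t by (intro eventually_at_left_real) auto
  have "eventually (\<lambda>x. 0 \<le> J x) (at_left b)"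
    using evs by (rule eventually_mono) (use pos in force)
  then have "((\<lambda>y. J y powr (3/4)) \<longlongrightarrow> 0) (at_left b)"
    by (intro tendsto_zero_powrI[OF lim]) auto
  then have lim2: "(\<psi> \<longlongrightarrow> 0 + k * b) (at_left b)"
    unfolding \<psi>_def[abs_def] by (intro tendsto_intros)
  have ev2: "eventually (\<lambda>y. \<psi> t \<le> \<psi> y) (at_left b)"
    using evt by (rule eventually_mono) (use le in auto)
  have "\<psi> t \<le> 0 + k * b"
    by (rule tendsto_lowerbound[OF lim2 ev2]) simp
  then have p: "J t powr (3/4) \<le> k * (b - t)" unfolding \<psi>_def by (simp add: algebra_simps)
  have "J t = (J t powr (3/4)) powr (4/3)" using pos[OF t] by (simp add: powr_powr)
  also have "\<dots> \<le> (k * (b - t)) powr (4/3)" by (rule powr_mono2) (use p in auto)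
  finally show ?thesis by (simp add: k_def)
qed

definition gv :: "'a::real_normed_vector \<Rightarrow> 'a" where
  "gv v = (1 / norm v ^ 3) *\<^sub>R v"

lemma gv_lip_real:
  fixes x y d \<delta> :: real
  assumes "\<delta> > 0" "x \<ge> \<delta>" "y \<ge> \<delta>" "\<bar>x - y\<bar> \<le> d"
  shows "d / x^3 + y * \<bar>1 / x^3 - 1 / y^3\<bar> \<le> 4 * d / \<delta>^3"
proof -
  have x: "x > 0" and y: "y > 0" using assms by auto
  have d: "d \<ge> 0" using assms(4) by linarith
  have e1: "y * \<bar>1 / x^3 - 1 / y^3\<bar> = \<bar>y - x\<bar> * (x^2 + x*y + y^2) / (x^3 * y^2)"
  proof -
    have "1 / x^3 - 1 / y^3 = (y - x) * (x^2 + x*y + y^2) / (x^3 * y^3)"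
      using x y by (simp add: field_simps power2_eq_square power3_eq_cube)
    then have "y * \<bar>1 / x^3 - 1 / y^3\<bar> = y * (\<bar>y - x\<bar> * (x^2 + x*y + y^2) / (x^3 * y^3))"
      using x y by (simp add: abs_mult abs_divide)
    also have "\<dots> = \<bar>y - x\<bar> * (x^2 + x*y + y^2) / (x^3 * y^2)"
      using x y by (simp add: field_simps power2_eq_square power3_eq_cube)
    finally show ?thesis .
  qed
  have e2: "\<bar>y - x\<bar> * (x^2 + x*y + y^2) / (x^3 * y^2) = \<bar>y - x\<bar> * (1 / (x * y^2) + 1 / (x^2 * y) + 1 / x^3)"
    using x y by (simp add: field_simps power2_eq_square power3_eq_cube)
  have i1: "1 / (x * y^2) \<le> 1 / \<delta>^3"
  proof -
    have "\<delta> * \<delta>^2 \<le> x * y^2" by (rule mult_mono) (use assms in \<open>auto intro: power_mono\<close>)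
    then have "\<delta>^3 \<le> x * y^2" by (simp add: power3_eq_cube power2_eq_square algebra_simps)
    then show ?thesis using assms by (intro divide_left_mono) auto
  qed
  have i2: "1 / (x^2 * y) \<le> 1 / \<delta>^3"
  proof -
    have "\<delta>^2 * \<delta> \<le> x^2 * y" by (rule mult_mono) (use assms in \<open>auto intro: power_mono\<close>)
    then have "\<delta>^3 \<le> x^2 * y" by (simp add: power3_eq_cube power2_eq_square algebra_simps)
    then show ?thesis using assms by (intro divide_left_mono) auto
  qed
  have i3: "1 / x^3 \<le> 1 / \<delta>^3"
    using assms by (intro divide_left_mono power_mono) auto
  have "\<bar>y - x\<bar> * (1 / (x * y^2) + 1 / (x^2 * y) + 1 / x^3) \<le> d * (3 / \<delta>^3)"
    using i1 i2 i3 assms(4) d x y by (intro mult_mono) (auto simp: abs_minus_commute)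
  moreover have "d / x^3 \<le> d / \<delta>^3" using mult_left_mono[OF i3 d] by simp
  ultimately have Z: "y * \<bar>1 / x^3 - 1 / y^3\<bar> \<le> d * (3 / \<delta>^3)" "d / x^3 \<le> d / \<delta>^3"
    using e1 e2 by simp_all
  have "d / \<delta>^3 + d * (3 / \<delta>^3) = 4 * d / \<delta>^3" by (simp add: field_simps)
  then show ?thesis using Z by linarith
qed

lemma gv_lip:
  fixes a b :: "'a::real_normed_vector"
  assumes "\<delta> > 0" "norm a \<ge> \<delta>" "norm b \<ge> \<delta>"
  shows "norm (gv a - gv b) \<le> 4 / \<delta>^3 * norm (a - b)"
proof -
  have "gv a - gv b = (1 / norm a ^ 3) *\<^sub>R (a - b) + (1 / norm a ^ 3 - 1 / norm b ^ 3) *\<^sub>R b"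
    unfolding gv_def by (simp add: algebra_simps)
  then have "norm (gv a - gv b) \<le> norm ((1 / norm a ^ 3) *\<^sub>R (a - b)) + norm ((1 / norm a ^ 3 - 1 / norm b ^ 3) *\<^sub>R b)"
    using norm_triangle_ineq[of "(1 / norm a ^ 3) *\<^sub>R (a - b)" "(1 / norm a ^ 3 - 1 / norm b ^ 3) *\<^sub>R b"] by simp
  then have "norm (gv a - gv b) \<le> norm (a - b) / norm a ^ 3 + norm b * \<bar>1 / norm a ^ 3 - 1 / norm b ^ 3\<bar>"
    by (simp add: mult.commute)
  also have "\<dots> \<le> 4 * norm (a - b) / \<delta>^3"
    by (rule gv_lip_real) (use assms norm_triangle_ineq3 in auto)
  finally show ?thesis by simp
qed

lemma cs2: "p * q + r * s \<le> sqrt (p^2 + r^2) * sqrt (q^2 + s^2)" for p q r s :: real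
proof -
  have "(p * q + r * s)^2 \<le> (p^2 + r^2) * (q^2 + s^2)"
  proof -
    have "0 \<le> (p * s - r * q)^2" by simp
    then show ?thesis by (simp add: power2_eq_square algebra_simps)
  qed
  then have "sqrt ((p * q + r * s)^2) \<le> sqrt ((p^2 + r^2) * (q^2 + s^2))"
    by (rule real_sqrt_le_mono)
  then have "\<bar>p * q + r * s\<bar> \<le> sqrt ((p^2 + r^2) * (q^2 + s^2))" by simp
  then show ?thesis by (simp add: real_sqrt_mult)
qed

lemma weighted_cs:
  fixes m :: "nat \<Rightarrow> real" and a b :: "nat \<Rightarrow> real"
  assumes "\<And>i. i \<in> S \<Longrightarrow> m i \<ge> 0"
  shows "(\<Sum>i\<in>S. m i * a i * b i)^2 \<le> (\<Sum>i\<in>S. m i * a i ^ 2) * (\<Sum>i\<in>S. m i * b i ^ 2)"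
proof -
  have "(\<Sum>i\<in>S. (sqrt (m i) * a i) * (sqrt (m i) * b i))^2
      \<le> (\<Sum>i\<in>S. (sqrt (m i) * a i)^2) * (\<Sum>i\<in>S. (sqrt (m i) * b i)^2)"
    by (rule Cauchy_Schwarz_ineq_sum)
  moreover have "(\<Sum>i\<in>S. (sqrt (m i) * a i) * (sqrt (m i) * b i)) = (\<Sum>i\<in>S. m i * a i * b i)"
    using assms by (intro sum.cong) (auto simp: algebra_simps)
  moreover have "(\<Sum>i\<in>S. (sqrt (m i) * a i)^2) = (\<Sum>i\<in>S. m i * a i ^ 2)"
    using assms by (intro sum.cong) (auto simp: power_mult_distrib)
  moreover have "(\<Sum>i\<in>S. (sqrt (m i) * b i)^2) = (\<Sum>i\<in>S. m i * b i ^ 2)"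
    using assms by (intro sum.cong) (auto simp: power_mult_distrib)
  ultimately show ?thesis by simp
qed

lemma sundman_ineq:
  fixes cr :: "'a::real_inner \<Rightarrow> 'a \<Rightarrow> 'b::real_inner" and m :: "nat \<Rightarrow> real"
  assumes crI: "\<And>x v. (x \<bullet> v)^2 + (norm (cr x v))^2 \<le> (norm x)^2 * (norm v)^2"
    and m: "\<And>i. i \<in> S \<Longrightarrow> m i \<ge> 0"
  shows "(\<Sum>i\<in>S. m i * (x i \<bullet> v i))^2 + (norm (\<Sum>i\<in>S. m i *\<^sub>R cr (x i) (v i)))^2
     \<le> (\<Sum>i\<in>S. m i * (norm (x i))^2) * (\<Sum>i\<in>S. m i * (norm (v i))^2)"
proof -
  define A where "A = (\<Sum>i\<in>S. m i * (x i \<bullet> v i))"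
  define V where "V = (\<Sum>i\<in>S. m i *\<^sub>R cr (x i) (v i))"
  define R where "R = sqrt (A^2 + (norm V)^2)"
  have R0: "R \<ge> 0" by (simp add: R_def)
  have "R^2 = A^2 + (norm V)^2" by (simp add: R_def)
  also have "\<dots> = A * A + V \<bullet> V" using power2_norm_eq_inner[of V] by (simp add: power2_eq_square)
  also have "\<dots> = (\<Sum>i\<in>S. m i * ((x i \<bullet> v i) * A + cr (x i) (v i) \<bullet> V))"
    by (simp add: A_def [of] V_def [of] sum_distrib_right sum.distrib inner_sum_left algebra_simps)
  also have "\<dots> \<le> (\<Sum>i\<in>S. m i * (norm (x i) * norm (v i) * R))"
  proof (rule sum_mono)
    fix i assume i: "i \<in> S"
    have "(x i \<bullet> v i) * A + cr (x i) (v i) \<bullet> V \<le> (x i \<bullet> v i) * A + norm (cr (x i) (v i)) * norm V"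
      using Cauchy_Schwarz_ineq2[of "cr (x i) (v i)" V] by (smt (verit) abs_le_iff)
    also have "\<dots> \<le> sqrt ((x i \<bullet> v i)^2 + (norm (cr (x i) (v i)))^2) * sqrt (A^2 + (norm V)^2)"
      by (rule cs2)
    also have "sqrt ((x i \<bullet> v i)^2 + (norm (cr (x i) (v i)))^2) \<le> norm (x i) * norm (v i)"
    proof -
      have "sqrt ((x i \<bullet> v i)^2 + (norm (cr (x i) (v i)))^2) \<le> sqrt ((norm (x i) * norm (v i))^2)"
        by (rule real_sqrt_le_mono) (use crI[of "x i" "v i"] in \<open>simp add: power_mult_distrib\<close>)
      then show ?thesis by simp
    qed
    finally have "(x i \<bullet> v i) * A + cr (x i) (v i) \<bullet> V \<le> norm (x i) * norm (v i) * R"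
      unfolding R_def by (simp add: mult_right_mono)
    then show "m i * ((x i \<bullet> v i) * A + cr (x i) (v i) \<bullet> V) \<le> m i * (norm (x i) * norm (v i) * R)"
      using m[OF i] by (rule mult_left_mono)
  qed
  also have "\<dots> = (\<Sum>i\<in>S. m i * norm (x i) * norm (v i)) * R"
    by (simp add: sum_distrib_right sum_distrib_left algebra_simps)
  finally have "R^2 \<le> (\<Sum>i\<in>S. m i * norm (x i) * norm (v i)) * R" .
  moreover have Snn: "0 \<le> (\<Sum>i\<in>S. m i * norm (x i) * norm (v i))"
    using m by (intro sum_nonneg) auto
  ultimately have "R \<le> (\<Sum>i\<in>S. m i * norm (x i) * norm (v i))"
    using R0 by (cases "R = 0") (auto simp: power2_eq_square mult_le_cancel_right)
  then have "R^2 \<le> (\<Sum>i\<in>S. m i * norm (x i) * norm (v i))^2"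
    using R0 by (intro power_mono) auto
  also have "\<dots> \<le> (\<Sum>i\<in>S. m i * (norm (x i))^2) * (\<Sum>i\<in>S. m i * (norm (v i))^2)"
    by (rule weighted_cs) (use m in auto)
  finally show ?thesis by (simp add: R_def A_def V_def)
qed


lemma vd_inner:
  assumes "(x has_vector_derivative x') (at t)" "(y has_vector_derivative y') (at t)"
  shows "((\<lambda>s. x s \<bullet> y s) has_real_derivative (x t \<bullet> y' + x' \<bullet> y t)) (at t)"
  unfolding has_real_derivative_iff_has_vector_derivative
  by (rule bounded_bilinear.has_vector_derivative[OF bounded_bilinear_inner assms])

lemma inv_norm_vderiv:
  fixes v :: "real \<Rightarrow> 'a::real_inner"
  assumes v: "(v has_vector_derivative v') (at t)" and nz: "v t \<noteq> 0"
  shows "((\<lambda>s. 1 / norm (v s)) has_real_derivative (- (v t \<bullet> v') / norm (v t) ^ 3)) (at t)"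
proof -
  have D: "((\<lambda>s. norm (v s)) has_derivative (\<lambda>h. (h *\<^sub>R v') \<bullet> sgn (v t))) (at t)"
    using has_derivative_compose[OF v[unfolded has_vector_derivative_def] has_derivative_norm[OF nz]] by simp
  have E: "(\<lambda>h. (h *\<^sub>R v') \<bullet> sgn (v t)) = (*) ((v t \<bullet> v') / norm (v t))"
    by (auto simp: sgn_div_norm inner_commute field_simps)
  have n: "((\<lambda>s. norm (v s)) has_real_derivative (v t \<bullet> v') / norm (v t)) (at t)"
    using D unfolding E has_field_derivative_def .
  have nn: "norm (v t) \<noteq> 0" using nz by simp
  have X: "((\<lambda>s. inverse (norm (v s))) has_real_derivative - ((v t \<bullet> v') / norm (v t) * inverse (norm (v t) ^ 2))) (at t)"
    using DERIV_inverse_fun[OF n nn] by (simp add: power2_eq_square)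
  have EQ: "- ((v t \<bullet> v') / norm (v t) * inverse (norm (v t) ^ 2)) = - (v t \<bullet> v') / norm (v t) ^ 3"
    using nn by (simp add: divide_inverse power2_eq_square power3_eq_cube mult.assoc)
  have F: "(\<lambda>s. 1 / norm (v s)) = (\<lambda>s. inverse (norm (v s)))" by (simp add: inverse_eq_divide)
  show ?thesis unfolding F EQ[symmetric] by (rule X)
qed

lemma pair_swap:
  assumes "finite S"
  shows "(\<Sum>i\<in>S. \<Sum>j\<in>S-{i}. f i j) = (\<Sum>i\<in>S. \<Sum>j\<in>S-{i}. f j i)"
proof -
  have e: "(\<Sum>j\<in>S-{i}. g j) = (\<Sum>j\<in>S. if j = i then 0 else g j)" for g :: "'a \<Rightarrow> 'b::comm_monoid_add" and i
  proof -
    have "(\<Sum>j\<in>S. if j = i then 0 else g j) = (\<Sum>j\<in>S-{i}. if j = i then 0 else g j)"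
      using assms by (intro sum.mono_neutral_right) auto
    also have "\<dots> = (\<Sum>j\<in>S-{i}. g j)" by (intro sum.cong) auto
    finally show ?thesis by simp
  qed
  have "(\<Sum>i\<in>S. \<Sum>j\<in>S-{i}. f i j) = (\<Sum>i\<in>S. \<Sum>j\<in>S. if j = i then 0 else f i j)"
    by (simp add: e)
  also have "\<dots> = (\<Sum>j\<in>S. \<Sum>i\<in>S. if j = i then 0 else f i j)"
    by (rule sum.swap)
  also have "\<dots> = (\<Sum>i\<in>S. \<Sum>j\<in>S-{i}. f j i)"
    by (simp add: e eq_commute)
  finally show ?thesis .
qed

lemma pair_antisym_zero:
  fixes f :: "nat \<Rightarrow> nat \<Rightarrow> 'b::real_vector"
  assumes "finite S" "\<And>i j. f j i = - f i j"
  shows "(\<Sum>i\<in>S. \<Sum>j\<in>S-{i}. f i j) = 0"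
proof -
  have "(\<Sum>i\<in>S. \<Sum>j\<in>S-{i}. f i j) = (\<Sum>i\<in>S. \<Sum>j\<in>S-{i}. f j i)" by (rule pair_swap[OF assms(1)])
  also have "\<dots> = (\<Sum>i\<in>S. \<Sum>j\<in>S-{i}. - f i j)" by (intro sum.cong refl) (rule assms(2))
  also have "\<dots> = - (\<Sum>i\<in>S. \<Sum>j\<in>S-{i}. f i j)" by (simp add: sum_negf)
  finally have e: "(\<Sum>i\<in>S. \<Sum>j\<in>S-{i}. f i j) = - (\<Sum>i\<in>S. \<Sum>j\<in>S-{i}. f i j)" .
  then have "(2::real) *\<^sub>R (\<Sum>i\<in>S. \<Sum>j\<in>S-{i}. f i j) = 0"
    by (metis add.right_inverse scaleR_2)
  then show ?thesis by simp
qed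

lemma pair_sym_half:
  fixes f :: "nat \<Rightarrow> nat \<Rightarrow> 'b::real_vector"
  assumes "finite S"
  shows "(\<Sum>i\<in>S. \<Sum>j\<in>S-{i}. f i j) = (1/2) *\<^sub>R (\<Sum>i\<in>S. \<Sum>j\<in>S-{i}. f i j + f j i)"
proof -
  have "(\<Sum>i\<in>S. \<Sum>j\<in>S-{i}. f i j + f j i) = (\<Sum>i\<in>S. \<Sum>j\<in>S-{i}. f i j) + (\<Sum>i\<in>S. \<Sum>j\<in>S-{i}. f j i)"
    by (simp add: sum.distrib)
  also have "\<dots> = 2 *\<^sub>R (\<Sum>i\<in>S. \<Sum>j\<in>S-{i}. f i j)" using pair_swap[OF assms, of f] by (simp add: scaleR_2)
  finally show ?thesis by simp
qed

lemma cmass_sum_zero: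
  fixes x :: "nat \<Rightarrow> 'a::real_vector"
  assumes "(\<Sum>i\<in>G. m i) \<noteq> 0"
  shows "(\<Sum>i\<in>G. m i *\<^sub>R (x i - cmass m G x)) = 0"
proof -
  have "(\<Sum>i\<in>G. m i *\<^sub>R (x i - cmass m G x)) = (\<Sum>i\<in>G. m i *\<^sub>R x i) - (\<Sum>i\<in>G. m i) *\<^sub>R cmass m G x"
    by (simp add: algebra_simps sum_subtractf scaleR_sum_left)
  also have "(\<Sum>i\<in>G. m i) *\<^sub>R cmass m G x = (\<Sum>i\<in>G. m i *\<^sub>R x i)"
    using assms by (simp add: cmass_def)
  finally show ?thesis by simp
qed

lemma cmass_var_le:
  fixes x :: "nat \<Rightarrow> 'a::real_inner"
  assumes "(\<Sum>i\<in>G. m i) > 0" "\<And>i. i \<in> G \<Longrightarrow> m i \<ge> 0"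
  shows "(\<Sum>i\<in>G. m i * (norm (x i - cmass m G x))^2) \<le> (\<Sum>i\<in>G. m i * (norm (x i - y))^2)"
proof -
  define c where "c = cmass m G x"
  have z: "(\<Sum>i\<in>G. m i *\<^sub>R (x i - c)) = 0" using cmass_sum_zero[of m G x] assms(1) unfolding c_def by simp
  have pt: "norm (x i - y)^2 = norm (x i - c)^2 + 2 * ((x i - c) \<bullet> (c - y)) + norm (c - y)^2" for i
    by (simp add: power2_norm_eq_inner inner_diff_left inner_diff_right inner_commute algebra_simps)
  have "(\<Sum>i\<in>G. m i * (norm (x i - y))^2) = (\<Sum>i\<in>G. m i * norm (x i - c)^2) + 2 * (\<Sum>i\<in>G. m i * ((x i - c) \<bullet> (c - y)))
       + (\<Sum>i\<in>G. m i) * norm (c - y)^2"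
  proof -
    have "m i * (norm (x i - y))^2 = m i * norm (x i - c)^2 + 2 * (m i * ((x i - c) \<bullet> (c - y))) + m i * norm (c - y)^2" for i
      unfolding pt by (simp add: distrib_left)
    then show ?thesis by (simp add: sum.distrib sum_distrib_left sum_distrib_right)
  qed
  also have "(\<Sum>i\<in>G. m i * ((x i - c) \<bullet> (c - y))) = (\<Sum>i\<in>G. m i *\<^sub>R (x i - c)) \<bullet> (c - y)"
    by (simp add: inner_sum_left)
  also have "\<dots> = 0" using z by simp
  finally show ?thesis using assms(1) by (simp add: c_def)
qed


lemma inv_norm_sderiv:
  fixes x0 z :: "'a::real_inner"
  assumes "x0 \<noteq> z"
  shows "((\<lambda>x. c / norm (x - z)) has_derivative (\<lambda>h. c * ((z - x0) \<bullet> h) / norm (x0 - z)^3)) (at x0)"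
proof -
  have nz: "x0 - z \<noteq> 0" using assms by simp
  have N: "((\<lambda>x. norm (x - z)) has_derivative (\<lambda>h. h \<bullet> sgn (x0 - z))) (at x0)"
    using has_derivative_compose[OF has_derivative_diff[OF has_derivative_ident has_derivative_const] has_derivative_norm[OF nz]]
    by simp
  have nn: "norm (x0 - z) \<noteq> 0" using nz by simp
  have "((\<lambda>x. c / norm (x - z)) has_derivative
     (\<lambda>h. - c * (inverse (norm (x0 - z)) * (h \<bullet> sgn (x0 - z)) * inverse (norm (x0 - z))) + 0 / norm (x0 - z))) (at x0)"
    by (rule has_derivative_divide[OF has_derivative_const N]) (use nn in simp)
  then show ?thesis
  proof (rule has_derivative_eq_rhs)
    show "(\<lambda>h. - c * (inverse (norm (x0 - z)) * (h \<bullet> sgn (x0 - z)) * inverse (norm (x0 - z))) + 0 / norm (x0 - z))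
       = (\<lambda>h. c * ((z - x0) \<bullet> h) / norm (x0 - z)^3)"
    proof
      fix h
      have "(z - x0) \<bullet> h = - ((x0 - z) \<bullet> h)" by (simp add: inner_diff_left)
      moreover have "h \<bullet> sgn (x0 - z) = ((x0 - z) \<bullet> h) / norm (x0 - z)"
        by (simp only: sgn_div_norm inner_scaleR_right inner_commute[of h]) (simp add: divide_inverse mult.commute)
      ultimately show "- c * (inverse (norm (x0 - z)) * (h \<bullet> sgn (x0 - z)) * inverse (norm (x0 - z))) + 0 / norm (x0 - z)
          = c * ((z - x0) \<bullet> h) / norm (x0 - z)^3"
        using nn by (simp add: field_simps power3_eq_cube)
    qed
  qed
qed

locale nb =
  fixes n :: nat and m :: "nat \<Rightarrow> real" and t0 T :: real
    and q qd qdd :: "real \<Rightarrow> nat \<Rightarrow> 'a::euclidean_space"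
    and G :: "nat set" and L :: "nat \<Rightarrow> 'a" and LG :: 'a
  assumes mpos: "\<And>i. i \<in> {1..n} \<Longrightarrow> m i > 0"
    and t0T: "t0 < T"
    and distinct: "\<And>t i j. t \<in> {t0..<T} \<Longrightarrow> i \<in> {1..n} \<Longrightarrow> j \<in> {1..n} \<Longrightarrow> i \<noteq> j \<Longrightarrow> q t i \<noteq> q t j"
    and dq0: "\<And>t i. t \<in> {t0..<T} \<Longrightarrow> i \<in> {1..n} \<Longrightarrow>
        ((\<lambda>s. q s i) has_vector_derivative qd t i) (at t within {t0..<T})"
    and dqd0: "\<And>t i. t \<in> {t0..<T} \<Longrightarrow> i \<in> {1..n} \<Longrightarrow>
        ((\<lambda>s. qd s i) has_vector_derivative qdd t i) (at t within {t0..<T})"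
    and pot: "\<And>t i. t \<in> {t0..<T} \<Longrightarrow> i \<in> {1..n} \<Longrightarrow>
        ((\<lambda>x. nbU n m ((q t)(i := x))) has_derivative (\<lambda>h. (m i *\<^sub>R qdd t i) \<bullet> h)) (at (q t i))"
    and limL: "\<And>i. i \<in> {1..n} \<Longrightarrow> ((\<lambda>t. q t i) \<longlongrightarrow> L i) (at_left T)"
    and GN: "G \<subseteq> {1..n}" and cardG: "card G \<ge> 2"
    and LGi: "\<And>i. i \<in> G \<Longrightarrow> L i = LG"
    and LGj: "\<And>j. j \<in> {1..n} \<Longrightarrow> j \<notin> G \<Longrightarrow> L j \<noteq> LG"
begin

abbreviation "N \<equiv> {1..n}"

lemma finG: "finite G" using GN finite_subset by blast

lemma mposG: "i \<in> G \<Longrightarrow> m i > 0" using GN mpos by auto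

lemma dq: "t \<in> {t0<..<T} \<Longrightarrow> i \<in> N \<Longrightarrow> ((\<lambda>s. q s i) has_vector_derivative qd t i) (at t)"
  using dq0[of t i] at_within_interior[of t "{t0..<T}"] by auto

lemma dqd: "t \<in> {t0<..<T} \<Longrightarrow> i \<in> N \<Longrightarrow> ((\<lambda>s. qd s i) has_vector_derivative qdd t i) (at t)"
  using dqd0[of t i] at_within_interior[of t "{t0..<T}"] by auto

lemma force:
  assumes t: "t \<in> {t0..<T}" and i: "i \<in> N"
  shows "qdd t i = (\<Sum>j\<in>N-{i}. m j *\<^sub>R gv (q t j - q t i))"
proof -
  define y where "y = q t"
  define f where "f j h = m i * m j * ((y j - y i) \<bullet> h) / norm (y i - y j)^3" for j h
  define D where "D a b = (\<lambda>h. if a = i then f b h else if b = i then f a h else 0)" for a b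
  have yd: "a \<in> N \<Longrightarrow> b \<in> N \<Longrightarrow> a \<noteq> b \<Longrightarrow> y a \<noteq> y b" for a b
    using distinct[OF t] by (simp add: y_def)
  have tm: "((\<lambda>x. m a * m b / dist (((y)(i := x)) a) (((y)(i := x)) b)) has_derivative D a b) (at (y i))"
    if a: "a \<in> N" and b: "b \<in> {a<..n}" for a b
  proof -
    have bN: "b \<in> N" "a \<noteq> b" using a b by auto
    consider "a = i" | "b = i" | "a \<noteq> i" "b \<noteq> i" using bN by blast
    then show ?thesis
    proof cases
      case 1
      then have bi: "b \<noteq> i" using bN by auto
      have "((\<lambda>x. m a * m b / norm (x - y b)) has_derivative
            (\<lambda>h. m a * m b * ((y b - y i) \<bullet> h) / norm (y i - y b)^3)) (at (y i))"
        by (rule inv_norm_sderiv) (use yd[of i b] bN i 1 in auto)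
      then show ?thesis using 1 bi by (simp add: D_def f_def dist_norm)
    next
      case 2
      then have ai: "a \<noteq> i" using bN by auto
      have "((\<lambda>x. m a * m b / norm (x - y a)) has_derivative
            (\<lambda>h. m a * m b * ((y a - y i) \<bullet> h) / norm (y i - y a)^3)) (at (y i))"
        by (rule inv_norm_sderiv) (use yd[of i a] a i ai in auto)
      moreover have "(\<lambda>x. m a * m b / norm (x - y a)) = (\<lambda>x. m a * m b / dist (y a) x)"
        by (simp add: dist_norm norm_minus_commute)
      ultimately show ?thesis using 2 ai by (simp add: D_def f_def mult.commute)
    next
      case 3
      then show ?thesis by (simp add: D_def)
    qed
  qed
  have "((\<lambda>x. nbU n m ((y)(i := x))) has_derivative (\<lambda>h. \<Sum>a\<in>N. \<Sum>b\<in>{a<..n}. D a b h)) (at (y i))"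
    unfolding nbU_def by (intro has_derivative_sum tm)
  moreover have "((\<lambda>x. nbU n m ((y)(i := x))) has_derivative (\<lambda>h. (m i *\<^sub>R qdd t i) \<bullet> h)) (at (y i))"
    using pot[OF t i] by (simp add: y_def)
  ultimately have eqf: "(\<lambda>h. \<Sum>a\<in>N. \<Sum>b\<in>{a<..n}. D a b h) = (\<lambda>h. (m i *\<^sub>R qdd t i) \<bullet> h)"
    by (rule has_derivative_unique)
  have sumD: "(\<Sum>a\<in>N. \<Sum>b\<in>{a<..n}. D a b h) = (\<Sum>j\<in>N-{i}. f j h)" for h
  proof -
    have inner: "(\<Sum>b\<in>{a<..n}. D a b h) = (if a = i then (\<Sum>b\<in>{i<..n}. f b h) else if a < i then f a h else 0)"
      if a: "a \<in> N" for a
    proof (cases "a = i")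
      case True then show ?thesis by (simp add: D_def)
    next
      case False
      then have "(\<Sum>b\<in>{a<..n}. D a b h) = (\<Sum>b\<in>{a<..n}. if b = i then f a h else 0)"
        by (simp add: D_def)
      also have "\<dots> = (if i \<in> {a<..n} then f a h else 0)" by (simp add: sum.delta')
      also have "\<dots> = (if a < i then f a h else 0)" using i by auto
      finally show ?thesis using False by simp
    qed
    have "(\<Sum>a\<in>N. \<Sum>b\<in>{a<..n}. D a b h) = (\<Sum>a\<in>N. if a = i then (\<Sum>b\<in>{i<..n}. f b h) else if a < i then f a h else 0)"
      by (rule sum.cong) (auto simp: inner)
    also have "\<dots> = (\<Sum>b\<in>{i<..n}. f b h) + (\<Sum>a\<in>N-{i}. if a = i then (\<Sum>b\<in>{i<..n}. f b h) else if a < i then f a h else 0)"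
      using i by (simp add: sum.remove)
    also have "(\<Sum>a\<in>N-{i}. if a = i then (\<Sum>b\<in>{i<..n}. f b h) else if a < i then f a h else 0)
        = (\<Sum>a\<in>N-{i}. if a < i then f a h else 0)" by (rule sum.cong) auto
    also have "\<dots> = (\<Sum>a\<in>{a\<in>N-{i}. a < i}. f a h)" by (rule sum.inter_filter[symmetric]) simp
    also have "{a\<in>N-{i}. a < i} = {1..<i}" using i by auto
    also have "(\<Sum>b\<in>{i<..n}. f b h) + (\<Sum>a\<in>{1..<i}. f a h) = (\<Sum>j\<in>{i<..n} \<union> {1..<i}. f j h)"
      by (rule sum.union_disjoint[symmetric]) auto
    also have "{i<..n} \<union> {1..<i} = N - {i}" using i by auto
    finally show ?thesis .
  qed
  define V where "V = (\<Sum>j\<in>N-{i}. (m i * m j / norm (y i - y j)^3) *\<^sub>R (y j - y i))"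
  have "V \<bullet> h = (m i *\<^sub>R qdd t i) \<bullet> h" for h
  proof -
    have "V \<bullet> h = (\<Sum>j\<in>N-{i}. f j h)"
      by (simp add: V_def f_def inner_sum_left)
    also have "\<dots> = (m i *\<^sub>R qdd t i) \<bullet> h" using fun_cong[OF eqf, of h] sumD[of h] by simp
    finally show ?thesis .
  qed
  then have "(V - m i *\<^sub>R qdd t i) \<bullet> (V - m i *\<^sub>R qdd t i) = 0" by (simp add: inner_diff_left)
  then have mq: "m i *\<^sub>R qdd t i = V" by simp
  have "qdd t i = (1 / m i) *\<^sub>R (m i *\<^sub>R qdd t i)" using mpos[OF i] by simp
  also have "\<dots> = (1 / m i) *\<^sub>R V" by (simp only: mq)
  also have "\<dots> = (\<Sum>j\<in>N-{i}. m j *\<^sub>R gv (q t j - q t i))"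
    unfolding V_def scaleR_sum_right
  proof (rule sum.cong[OF refl])
    fix j
    have "norm (y i - y j) = norm (y j - y i)" by (rule norm_minus_commute)
    then show "(1 / m i) *\<^sub>R (m i * m j / norm (y i - y j)^3) *\<^sub>R (y j - y i) = m j *\<^sub>R gv (q t j - q t i)"
      using mpos[OF i] by (simp add: gv_def y_def)
  qed
  finally show ?thesis .
qed

end


lemma deriv_sum_inner:
  assumes "\<And>i. i\<in>S \<Longrightarrow> ((\<lambda>s. x s i) has_vector_derivative x' i) (at t)"
    and "\<And>i. i\<in>S \<Longrightarrow> ((\<lambda>s. y s i) has_vector_derivative y' i) (at t)"
  shows "((\<lambda>s. \<Sum>i\<in>S. m i * (x s i \<bullet> y s i)) has_real_derivative
          (\<Sum>i\<in>S. m i * (x t i \<bullet> y' i + x' i \<bullet> y t i))) (at t)"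
  by (intro DERIV_sum DERIV_cmult vd_inner assms)

lemma gv_neg: "gv (- v) = - gv v"
  by (simp add: gv_def)

lemma gv_minus: "gv (a - b) = - gv (b - a)"
  using gv_neg[of "b - a"] by simp

lemma inner_gv_self: "v \<bullet> gv v = 1 / norm v" for v :: "'a::real_inner"
proof (cases "v = 0")
  case True then show ?thesis by (simp add: gv_def)
next
  case False
  then have "v \<bullet> gv v = norm v ^ 2 / norm v ^ 3"
    by (simp add: gv_def power2_norm_eq_inner)
  also have "\<dots> = 1 / norm v" using False by (simp add: power2_eq_square power3_eq_cube)
  finally show ?thesis .
qed

context nb
begin

definition AF :: "nat set \<Rightarrow> real \<Rightarrow> nat \<Rightarrow> 'a" where
  "AF S t i = (\<Sum>j\<in>S-{i}. m j *\<^sub>R gv (q t j - q t i))"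

definition UU :: "nat set \<Rightarrow> real \<Rightarrow> real" where
  "UU S t = (1/2) * (\<Sum>i\<in>S. \<Sum>j\<in>S-{i}. m i * m j / norm (q t i - q t j))"

lemma force': "t \<in> {t0..<T} \<Longrightarrow> i \<in> N \<Longrightarrow> qdd t i = AF N t i"
  using force by (simp add: AF_def)

lemma AF_sum_zero:
  assumes S: "S \<subseteq> N"
  shows "(\<Sum>i\<in>S. m i *\<^sub>R AF S t i) = 0"
proof -
  have fin: "finite S" using S finite_subset by blast
  have "(\<Sum>i\<in>S. m i *\<^sub>R AF S t i) = (\<Sum>i\<in>S. \<Sum>j\<in>S-{i}. (m i * m j) *\<^sub>R gv (q t j - q t i))"
    by (simp add: AF_def scaleR_sum_right)
  also have "\<dots> = 0"
  proof (rule pair_antisym_zero[OF fin])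
    fix i j
    show "(m j * m i) *\<^sub>R gv (q t i - q t j) = - ((m i * m j) *\<^sub>R gv (q t j - q t i))"
      unfolding gv_minus[of "q t i" "q t j"] by (simp add: mult.commute)
  qed
  finally show ?thesis .
qed

lemma virial:
  assumes S: "S \<subseteq> N" and t: "t \<in> {t0..<T}"
  shows "(\<Sum>i\<in>S. m i * ((q t i - y i) \<bullet> AF S t i))
       = - UU S t + (1/2) * (\<Sum>i\<in>S. \<Sum>j\<in>S-{i}. m i * m j * ((y j - y i) \<bullet> gv (q t j - q t i)))"
proof -
  have fin: "finite S" using S finite_subset by blast
  define F where "F i j = m i * m j * ((q t i - y i) \<bullet> gv (q t j - q t i))" for i j
  have "(\<Sum>i\<in>S. m i * ((q t i - y i) \<bullet> AF S t i)) = (\<Sum>i\<in>S. \<Sum>j\<in>S-{i}. F i j)"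
    by (simp add: AF_def F_def inner_sum_right sum_distrib_left mult.assoc)
  also have "\<dots> = (1/2) *\<^sub>R (\<Sum>i\<in>S. \<Sum>j\<in>S-{i}. F i j + F j i)"
    by (rule pair_sym_half[OF fin])
  also have "(\<Sum>i\<in>S. \<Sum>j\<in>S-{i}. F i j + F j i) =
      (\<Sum>i\<in>S. \<Sum>j\<in>S-{i}. - (m i * m j / norm (q t i - q t j)) + m i * m j * ((y j - y i) \<bullet> gv (q t j - q t i)))"
  proof (intro sum.cong refl)
    fix i j assume i: "i \<in> S" and j: "j \<in> S - {i}"
    have "F i j + F j i = m i * m j * (((q t i - y i) - (q t j - y j)) \<bullet> gv (q t j - q t i))"
      unfolding F_def gv_minus[of "q t i" "q t j"] by (simp add: algebra_simps inner_diff_left)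
    also have "((q t i - y i) - (q t j - y j)) = - (q t j - q t i) + (y j - y i)" by (simp add: algebra_simps)
    also have "(- (q t j - q t i) + (y j - y i)) \<bullet> gv (q t j - q t i)
        = - (1 / norm (q t j - q t i)) + (y j - y i) \<bullet> gv (q t j - q t i)"
    proof -
      have e1: "(- (q t j - q t i)) \<bullet> gv (q t j - q t i) = - (1 / norm (q t j - q t i))"
        by (simp only: inner_minus_left inner_gv_self)
      show ?thesis by (simp only: inner_add_left e1)
    qed
    finally show "F i j + F j i = - (m i * m j / norm (q t i - q t j)) + m i * m j * ((y j - y i) \<bullet> gv (q t j - q t i))"
      by (simp add: algebra_simps norm_minus_commute)
  qed
  also have "\<dots> = - (\<Sum>i\<in>S. \<Sum>j\<in>S-{i}. m i * m j / norm (q t i - q t j))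
        + (\<Sum>i\<in>S. \<Sum>j\<in>S-{i}. m i * m j * ((y j - y i) \<bullet> gv (q t j - q t i)))"
    by (simp add: sum.distrib sum_negf sum_subtractf)
  finally show ?thesis by (simp add: UU_def algebra_simps)
qed

lemma dUU:
  assumes S: "S \<subseteq> N" and t: "t \<in> {t0<..<T}"
  shows "(UU S has_real_derivative (\<Sum>i\<in>S. m i * (qd t i \<bullet> AF S t i))) (at t)"
proof -
  have fin: "finite S" using S finite_subset by blast
  have t': "t \<in> {t0..<T}" using t by auto
  define F where "F i j = m i * m j * (qd t i \<bullet> gv (q t j - q t i))" for i j
  have tm: "((\<lambda>s. m i * m j / norm (q s i - q s j)) has_real_derivative (F i j + F j i)) (at t)"
    if i: "i \<in> S" and j: "j \<in> S - {i}" for i j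
  proof -
    have iN: "i \<in> N" "j \<in> N" "i \<noteq> j" using i j S by auto
    have v: "((\<lambda>s. q s i - q s j) has_vector_derivative (qd t i - qd t j)) (at t)"
      by (intro has_vector_derivative_diff dq t iN)
    have nz: "q t i - q t j \<noteq> 0" using distinct[OF t' iN] by simp
    have "((\<lambda>s. 1 / norm (q s i - q s j)) has_real_derivative
        (- ((q t i - q t j) \<bullet> (qd t i - qd t j)) / norm (q t i - q t j) ^ 3)) (at t)"
      by (rule inv_norm_vderiv[OF v nz])
    then have "((\<lambda>s. m i * m j * (1 / norm (q s i - q s j))) has_real_derivative
        m i * m j * (- ((q t i - q t j) \<bullet> (qd t i - qd t j)) / norm (q t i - q t j) ^ 3)) (at t)"
      by (rule DERIV_cmult)
    moreover have "m i * m j * (- ((q t i - q t j) \<bullet> (qd t i - qd t j)) / norm (q t i - q t j) ^ 3) = F i j + F j i"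
    proof -
      have n: "norm (q t j - q t i) = norm (q t i - q t j)" by (rule norm_minus_commute)
      show ?thesis unfolding F_def gv_def using n
        by (simp add: inner_diff_left inner_diff_right inner_commute algebra_simps divide_inverse)
    qed
    ultimately show ?thesis by simp
  qed
  have "((\<lambda>s. (1/2) * (\<Sum>i\<in>S. \<Sum>j\<in>S-{i}. m i * m j / norm (q s i - q s j))) has_real_derivative
      (1/2) * (\<Sum>i\<in>S. \<Sum>j\<in>S-{i}. F i j + F j i)) (at t)"
    by (intro DERIV_cmult DERIV_sum tm) auto
  moreover have "(1/2) * (\<Sum>i\<in>S. \<Sum>j\<in>S-{i}. F i j + F j i) = (\<Sum>i\<in>S. m i * (qd t i \<bullet> AF S t i))"
  proof -
    have "(\<Sum>i\<in>S. \<Sum>j\<in>S-{i}. F i j) = (1/2) *\<^sub>R (\<Sum>i\<in>S. \<Sum>j\<in>S-{i}. F i j + F j i)"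
      by (rule pair_sym_half[OF fin])
    moreover have "(\<Sum>i\<in>S. \<Sum>j\<in>S-{i}. F i j) = (\<Sum>i\<in>S. m i * (qd t i \<bullet> AF S t i))"
      by (simp add: AF_def F_def inner_sum_right sum_distrib_left mult.assoc)
    ultimately show ?thesis by simp
  qed
  ultimately show ?thesis unfolding UU_def[abs_def] by simp
qed

end


lemma abs_inner_gv: "\<bar>a \<bullet> gv v\<bar> \<le> norm a / norm v ^ 2" for a v :: "'a::real_inner"
proof (cases "v = 0")
  case True then show ?thesis by (simp add: gv_def)
next
  case False
  have "\<bar>a \<bullet> gv v\<bar> \<le> norm a * norm (gv v)" by (rule Cauchy_Schwarz_ineq2)
  also have "norm (gv v) = 1 / norm v ^ 2" using False
    by (simp add: gv_def power2_eq_square power3_eq_cube)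
  finally show ?thesis by simp
qed

lemma ev_interval: "eventually P (at_left (T::real)) \<Longrightarrow> \<exists>s<T. \<forall>t\<in>{s<..<T}. P t"
  by (auto simp: eventually_at_left_field)

context nb
begin

lemma dqL: "t \<in> {t0<..<T} \<Longrightarrow> i \<in> N \<Longrightarrow> ((\<lambda>s. q s i - c) has_vector_derivative qd t i) (at t)"
  using dq[of t i] by (simp add: has_vector_derivative_diff_const)

definition P :: "real \<Rightarrow> real" where
  "P t = (\<Sum>i\<in>N. m i * (qd t i \<bullet> qd t i))"

definition H :: "real \<Rightarrow> real" where
  "H t = P t / 2 - UU N t"

definition J :: "real \<Rightarrow> real" where
  "J t = (\<Sum>i\<in>N. m i * ((q t i - L i) \<bullet> (q t i - L i)))"

definition J1 :: "real \<Rightarrow> real" where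
  "J1 t = 2 * (\<Sum>i\<in>N. m i * ((q t i - L i) \<bullet> qd t i))"

definition J2 :: "real \<Rightarrow> real" where
  "J2 t = 2 * (\<Sum>i\<in>N. m i * ((q t i - L i) \<bullet> qdd t i + qd t i \<bullet> qd t i))"

definition Rr :: "real \<Rightarrow> real" where
  "Rr t = (1/2) * (\<Sum>i\<in>N. \<Sum>j\<in>N-{i}. m i * m j * ((L j - L i) \<bullet> gv (q t j - q t i)))"

lemma dH: "t \<in> {t0<..<T} \<Longrightarrow> (H has_real_derivative 0) (at t)"
proof -
  assume t: "t \<in> {t0<..<T}"
  have t': "t \<in> {t0..<T}" using t by auto
  have "(P has_real_derivative (\<Sum>i\<in>N. m i * (qd t i \<bullet> qdd t i + qdd t i \<bullet> qd t i))) (at t)"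
    unfolding P_def[abs_def] by (rule deriv_sum_inner) (use dqd t in auto)
  then have "(H has_real_derivative
      (\<Sum>i\<in>N. m i * (qd t i \<bullet> qdd t i + qdd t i \<bullet> qd t i)) / 2 - (\<Sum>i\<in>N. m i * (qd t i \<bullet> AF N t i))) (at t)"
    unfolding H_def[abs_def] by (intro DERIV_diff DERIV_cdivide dUU t) auto
  moreover have "(\<Sum>i\<in>N. m i * (qd t i \<bullet> qdd t i + qdd t i \<bullet> qd t i)) / 2 - (\<Sum>i\<in>N. m i * (qd t i \<bullet> AF N t i)) = 0"
  proof -
    have "(\<Sum>i\<in>N. m i * (qd t i \<bullet> qdd t i + qdd t i \<bullet> qd t i)) = 2 * (\<Sum>i\<in>N. m i * (qd t i \<bullet> AF N t i))"
      by (simp add: sum_distrib_left force'[OF t'] inner_commute algebra_simps)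
    then show ?thesis by simp
  qed
  ultimately show ?thesis by simp
qed

definition Hc where "Hc = H ((t0 + T) / 2)"

lemma H_const: "t \<in> {t0<..<T} \<Longrightarrow> H t = Hc"
proof -
  assume t: "t \<in> {t0<..<T}"
  define c where "c = (t0 + T) / 2"
  have c: "c \<in> {t0<..<T}" using t0T by (auto simp: c_def)
  have le: "H a \<le> H b" if "a \<in> {t0<..<T}" "b \<in> {t0<..<T}" "a \<le> b" for a b
    by (rule mono_from_deriv[where f'="\<lambda>_. 0"]) (use that dH in auto)
  have le2: "- H a \<le> - H b" if "a \<in> {t0<..<T}" "b \<in> {t0<..<T}" "a \<le> b" for a b
  proof (rule mono_from_deriv[where f="\<lambda>x. - H x" and f'="\<lambda>_. 0"])
    fix x assume "x \<in> {a..b}"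
    then have "x \<in> {t0<..<T}" using that by auto
    then show "((\<lambda>x. - H x) has_real_derivative 0) (at x)" using DERIV_minus[OF dH] by force
  qed (use that in auto)
  show ?thesis
    using le[OF t c] le[OF c t] le2[OF t c] le2[OF c t] unfolding Hc_def c_def[symmetric]
    by (cases "t \<le> c") auto
qed

lemma dJ: "t \<in> {t0<..<T} \<Longrightarrow> (J has_real_derivative J1 t) (at t)"
proof -
  assume t: "t \<in> {t0<..<T}"
  have "(J has_real_derivative (\<Sum>i\<in>N. m i * ((q t i - L i) \<bullet> qd t i + qd t i \<bullet> (q t i - L i)))) (at t)"
    unfolding J_def[abs_def] by (rule deriv_sum_inner) (use dqL t in auto)
  moreover have "(\<Sum>i\<in>N. m i * ((q t i - L i) \<bullet> qd t i + qd t i \<bullet> (q t i - L i))) = J1 t"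
    by (simp add: J1_def sum_distrib_left inner_commute algebra_simps)
  ultimately show ?thesis by simp
qed

lemma dJ1: "t \<in> {t0<..<T} \<Longrightarrow> (J1 has_real_derivative J2 t) (at t)"
proof -
  assume t: "t \<in> {t0<..<T}"
  have "((\<lambda>s. \<Sum>i\<in>N. m i * ((q s i - L i) \<bullet> qd s i)) has_real_derivative
      (\<Sum>i\<in>N. m i * ((q t i - L i) \<bullet> qdd t i + qd t i \<bullet> qd t i))) (at t)"
    by (rule deriv_sum_inner) (use dqL dqd t in auto)
  then show ?thesis unfolding J1_def[abs_def] J2_def by (rule DERIV_cmult)
qed

lemma J2_eq: "t \<in> {t0<..<T} \<Longrightarrow> J2 t = 2 * P t - 2 * UU N t + 2 * Rr t"
proof -
  assume t: "t \<in> {t0<..<T}"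
  have t': "t \<in> {t0..<T}" using t by auto
  have "(\<Sum>i\<in>N. m i * ((q t i - L i) \<bullet> qdd t i)) = (\<Sum>i\<in>N. m i * ((q t i - L i) \<bullet> AF N t i))"
    by (simp add: force'[OF t'])
  also have "\<dots> = - UU N t + Rr t"
    unfolding Rr_def by (rule virial[OF subset_refl t'])
  finally have v: "(\<Sum>i\<in>N. m i * ((q t i - L i) \<bullet> qdd t i)) = - UU N t + Rr t" .
  have "J2 t = 2 * (\<Sum>i\<in>N. m i * ((q t i - L i) \<bullet> qdd t i)) + 2 * P t"
    by (simp add: J2_def P_def sum.distrib distrib_left)
  then show ?thesis using v by simp
qed

lemma J2_eqH: "t \<in> {t0<..<T} \<Longrightarrow> J2 t = P t + 2 * Hc + 2 * Rr t"
  using J2_eq H_const[of t] by (simp add: H_def)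

lemma J2_eqU: "t \<in> {t0<..<T} \<Longrightarrow> J2 t = 4 * Hc + 2 * UU N t + 2 * Rr t"
  using J2_eq H_const[of t] by (simp add: H_def)

lemma J1_sq: "t \<in> {t0<..<T} \<Longrightarrow> J1 t ^ 2 \<le> 4 * J t * P t"
proof -
  assume t: "t \<in> {t0<..<T}"
  have mN: "\<And>i. i \<in> N \<Longrightarrow> m i \<ge> 0" using mpos by (simp add: less_imp_le)
  have "(\<Sum>i\<in>N. m i * ((q t i - L i) \<bullet> qd t i))^2 + (norm (\<Sum>i\<in>N. m i *\<^sub>R (\<lambda>x v. 0::real) (q t i - L i) (qd t i)))^2
      \<le> (\<Sum>i\<in>N. m i * (norm (q t i - L i))^2) * (\<Sum>i\<in>N. m i * (norm (qd t i))^2)"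
    by (rule sundman_ineq) (use mN Cauchy_Schwarz_ineq in \<open>auto simp: power2_norm_eq_inner\<close>)
  then have "(\<Sum>i\<in>N. m i * ((q t i - L i) \<bullet> qd t i))^2 \<le> J t * P t"
    by (simp add: J_def P_def power2_norm_eq_inner)
  then show ?thesis by (simp add: J1_def power_mult_distrib)
qed

end


context nb
begin

lemma two_in_G: "\<exists>a b. a \<in> G \<and> b \<in> G \<and> a \<noteq> b"
proof -
  have "G \<noteq> {}" using cardG by auto
  then obtain a where a: "a \<in> G" by auto
  have c1: "card (G - {a}) \<ge> 1" using cardG a finG by (simp add: card_Diff_singleton)
  have "G - {a} \<noteq> {}"
  proof
    assume e: "G - {a} = {}"
    have "card (G - {a}) = 0" unfolding e by (rule card.empty)
    then show False using c1 by linarith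
  qed
  then obtain b where "b \<in> G - {a}" by auto
  then show ?thesis using a by auto
qed

definition ga where "ga = (SOME a. \<exists>b. a \<in> G \<and> b \<in> G \<and> a \<noteq> b)"
definition gb where "gb = (SOME b. ga \<in> G \<and> b \<in> G \<and> ga \<noteq> b)"

lemma gab: "ga \<in> G" "gb \<in> G" "ga \<noteq> gb"
proof -
  have "\<exists>b. ga \<in> G \<and> b \<in> G \<and> ga \<noteq> b"
    unfolding ga_def by (rule someI_ex) (use two_in_G in blast)
  then have "ga \<in> G \<and> gb \<in> G \<and> ga \<noteq> gb"
    unfolding gb_def by (rule someI_ex)
  then show "ga \<in> G" "gb \<in> G" "ga \<noteq> gb" by auto
qed

lemma gabN: "ga \<in> N" "gb \<in> N" using gab GN by auto

lemma J_nonneg: "J t \<ge> 0"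
  unfolding J_def using mpos by (intro sum_nonneg mult_nonneg_nonneg) (auto simp: less_imp_le)

lemma J_pos: "t \<in> {t0<..<T} \<Longrightarrow> J t > 0"
proof (rule ccontr)
  assume t: "t \<in> {t0<..<T}" and "\<not> J t > 0"
  then have "J t = 0" using J_nonneg[of t] by simp
  then have z: "\<forall>i\<in>N. m i * ((q t i - L i) \<bullet> (q t i - L i)) = 0"
    unfolding J_def using mpos by (subst sum_nonneg_eq_0_iff[symmetric]) (auto intro!: mult_nonneg_nonneg simp: less_imp_le)
  have "m ga * ((q t ga - L ga) \<bullet> (q t ga - L ga)) = 0" using z gabN(1) by blast
  then have "q t ga = L ga" using mpos[OF gabN(1)] by simp
  moreover have "m gb * ((q t gb - L gb) \<bullet> (q t gb - L gb)) = 0" using z gabN(2) by blast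
  then have "q t gb = L gb" using mpos[OF gabN(2)] by simp
  moreover have "L ga = L gb" using LGi gab by auto
  ultimately have "q t ga = q t gb" by simp
  moreover have "q t ga \<noteq> q t gb" using distinct[of t ga gb] t gab gabN by auto
  ultimately show False by simp
qed

lemma J_lim: "(J \<longlongrightarrow> 0) (at_left T)"
proof -
  have "((\<lambda>t. \<Sum>i\<in>N. m i * ((q t i - L i) \<bullet> (q t i - L i))) \<longlongrightarrow> (\<Sum>i\<in>N. m i * ((L i - L i) \<bullet> (L i - L i)))) (at_left T)"
    by (intro tendsto_sum tendsto_mult tendsto_const tendsto_inner tendsto_diff limL) auto
  then show ?thesis by (simp add: J_def[abs_def])
qed

definition Cp where "Cp i j = m i * m j * (if L i = L j then 0 else 4 / norm (L j - L i))"

lemma Rr_term_ev: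
  assumes i: "i \<in> N" and j: "j \<in> N"
  shows "eventually (\<lambda>t. \<bar>m i * m j * ((L j - L i) \<bullet> gv (q t j - q t i))\<bar> \<le> Cp i j) (at_left T)"
proof (cases "L i = L j")
  case True then show ?thesis by (simp add: Cp_def)
next
  case False
  define d where "d = norm (L j - L i)"
  have d: "d > 0" using False by (simp add: d_def)
  have "((\<lambda>t. norm (q t j - q t i)) \<longlongrightarrow> d) (at_left T)"
    unfolding d_def by (intro tendsto_norm tendsto_diff limL i j)
  then have ev: "eventually (\<lambda>t. norm (q t j - q t i) > d / 2) (at_left T)"
    by (rule order_tendstoD) (use d in simp)
  show ?thesis
  proof (rule eventually_mono[OF ev])
    fix t assume h: "norm (q t j - q t i) > d / 2"
    have mm: "m i * m j > 0" using mpos i j by simp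
    have "\<bar>(L j - L i) \<bullet> gv (q t j - q t i)\<bar> \<le> d / norm (q t j - q t i) ^ 2"
      using abs_inner_gv d_def by metis
    also have "\<dots> \<le> d / (d/2)^2"
      using h d by (intro divide_left_mono power_mono mult_pos_pos) auto
    also have "\<dots> = 4 / d" using d by (simp add: field_simps power2_eq_square)
    finally have "\<bar>(L j - L i) \<bullet> gv (q t j - q t i)\<bar> \<le> 4 / d" .
    then have "m i * m j * \<bar>(L j - L i) \<bullet> gv (q t j - q t i)\<bar> \<le> m i * m j * (4 / d)"
      using mm by (intro mult_left_mono) auto
    then show "\<bar>m i * m j * ((L j - L i) \<bullet> gv (q t j - q t i))\<bar> \<le> Cp i j"
      using False mm mpos[OF i] mpos[OF j] by (simp add: Cp_def abs_mult d_def)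
  qed
qed

definition Rb where "Rb = (1/2) * (\<Sum>i\<in>N. \<Sum>j\<in>N-{i}. Cp i j)"

lemma Rr_bound_ev: "eventually (\<lambda>t. \<bar>Rr t\<bar> \<le> Rb) (at_left T)"
proof -
  have "eventually (\<lambda>t. \<forall>i\<in>N. \<forall>j\<in>N-{i}. \<bar>m i * m j * ((L j - L i) \<bullet> gv (q t j - q t i))\<bar> \<le> Cp i j) (at_left T)"
    by (intro eventually_ball_finite ballI Rr_term_ev) auto
  then show ?thesis
  proof (rule eventually_mono)
    fix t assume h: "\<forall>i\<in>N. \<forall>j\<in>N-{i}. \<bar>m i * m j * ((L j - L i) \<bullet> gv (q t j - q t i))\<bar> \<le> Cp i j"
    have "\<bar>\<Sum>i\<in>N. \<Sum>j\<in>N-{i}. m i * m j * ((L j - L i) \<bullet> gv (q t j - q t i))\<bar>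
        \<le> (\<Sum>i\<in>N. \<bar>\<Sum>j\<in>N-{i}. m i * m j * ((L j - L i) \<bullet> gv (q t j - q t i))\<bar>)" by (rule sum_abs)
    also have "\<dots> \<le> (\<Sum>i\<in>N. \<Sum>j\<in>N-{i}. Cp i j)"
    proof (rule sum_mono)
      fix i assume i: "i \<in> N"
      have "\<bar>\<Sum>j\<in>N-{i}. m i * m j * ((L j - L i) \<bullet> gv (q t j - q t i))\<bar>
          \<le> (\<Sum>j\<in>N-{i}. \<bar>m i * m j * ((L j - L i) \<bullet> gv (q t j - q t i))\<bar>)" by (rule sum_abs)
      also have "\<dots> \<le> (\<Sum>j\<in>N-{i}. Cp i j)" using h i by (intro sum_mono) auto
      finally show "\<bar>\<Sum>j\<in>N-{i}. m i * m j * ((L j - L i) \<bullet> gv (q t j - q t i))\<bar> \<le> (\<Sum>j\<in>N-{i}. Cp i j)" .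
    qed
    finally show "\<bar>Rr t\<bar> \<le> Rb" by (simp add: Rr_def Rb_def abs_mult)
  qed
qed

lemma UU_lower:
  assumes S: "S \<subseteq> N" and a: "a \<in> S" and b: "b \<in> S" and ab: "a \<noteq> b"
  shows "UU S t \<ge> (1/2) * (m a * m b / norm (q t a - q t b))"
proof -
  have fin: "finite S" using S finite_subset by blast
  have nn: "\<And>i j. i \<in> S \<Longrightarrow> j \<in> S \<Longrightarrow> m i * m j / norm (q t i - q t j) \<ge> 0"
    using mpos S by (auto intro!: divide_nonneg_nonneg mult_nonneg_nonneg simp: less_imp_le subsetD)
  have "m a * m b / norm (q t a - q t b) \<le> (\<Sum>j\<in>S-{a}. m a * m j / norm (q t a - q t j))"
    by (rule member_le_sum) (use a b ab nn fin in auto)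
  also have "\<dots> \<le> (\<Sum>i\<in>S. \<Sum>j\<in>S-{i}. m i * m j / norm (q t i - q t j))"
    by (rule member_le_sum[where f="\<lambda>i. \<Sum>j\<in>S-{i}. m i * m j / norm (q t i - q t j)"])
       (use a nn fin in \<open>auto intro!: sum_nonneg\<close>)
  finally show ?thesis by (simp add: UU_def)
qed

lemma gab_close_ev:
  assumes "\<epsilon> > 0"
  shows "eventually (\<lambda>t. norm (q t ga - q t gb) < \<epsilon>) (at_left T)"
proof -
  have "((\<lambda>t. norm (q t ga - q t gb)) \<longlongrightarrow> norm (L ga - L gb)) (at_left T)"
    by (intro tendsto_norm tendsto_diff limL gabN)
  moreover have "L ga = L gb" using LGi gab by auto
  ultimately have "((\<lambda>t. norm (q t ga - q t gb)) \<longlongrightarrow> 0) (at_left T)" by simp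
  then show ?thesis by (rule order_tendstoD) (use assms in simp)
qed

end


context nb
begin

lemma Rb_nonneg: "Rb \<ge> 0"
  unfolding Rb_def Cp_def using mpos
  by (intro mult_nonneg_nonneg sum_nonneg) (auto simp: less_imp_le)

lemma J_rate:
  "\<exists>s K. t0 \<le> s \<and> s < T \<and> K \<ge> 0 \<and>
     (\<forall>t\<in>{s<..<T}. J1 t \<le> 0 \<and> J t \<le> K * (T - t) powr (4/3) \<and> \<bar>Rr t\<bar> \<le> Rb)"
proof -
  define c0 where "c0 = 4 * \<bar>Hc\<bar> + 2 * Rb + 1"
  have c0: "c0 > 0" using Rb_nonneg by (simp add: c0_def)
  have mab: "m ga * m gb > 0" using mpos gabN by simp
  define eps where "eps = m ga * m gb / c0"
  have eps: "eps > 0" using c0 mab by (simp add: eps_def)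
  have ev: "eventually (\<lambda>t. \<bar>Rr t\<bar> \<le> Rb \<and> norm (q t ga - q t gb) < eps \<and> t \<in> {t0<..<T}) (at_left T)"
    by (intro eventually_conj Rr_bound_ev gab_close_ev eps eventually_at_left_real t0T)
  obtain s' where s': "s' < T" "\<forall>t\<in>{s'<..<T}. \<bar>Rr t\<bar> \<le> Rb \<and> norm (q t ga - q t gb) < eps \<and> t \<in> {t0<..<T}"
    using ev_interval[OF ev] by blast
  define s0 where "s0 = max s' t0"
  have s0: "t0 \<le> s0" "s0 < T" using s' t0T by (auto simp: s0_def)
  have good: "\<bar>Rr t\<bar> \<le> Rb" "norm (q t ga - q t gb) < eps" "t \<in> {t0<..<T}" if "t \<in> {s0<..<T}" for t
    using s'(2) that by (auto simp: s0_def)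
  have sub: "t \<in> {t0<..<T}" if "t \<in> {s0<..<T}" for t using good(3)[OF that] .
  have J2pos: "J2 t \<ge> 0" if t: "t \<in> {s0<..<T}" for t
  proof -
    have tt: "t \<in> {t0..<T}" using sub[OF t] by auto
    have nz: "norm (q t ga - q t gb) > 0" using distinct[OF tt gabN gab(3)] by simp
    have "m ga * m gb / norm (q t ga - q t gb) \<ge> m ga * m gb / eps"
      using good(2)[OF t] nz mab eps by (intro divide_left_mono) auto
    also have "m ga * m gb / eps = c0" using mab c0 mpos[OF gabN(1)] mpos[OF gabN(2)] by (simp add: eps_def)
    finally have "m ga * m gb / norm (q t ga - q t gb) \<ge> c0" .
    moreover have "UU N t \<ge> (1/2) * (m ga * m gb / norm (q t ga - q t gb))"
      by (rule UU_lower) (use gabN gab in auto)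
    ultimately have "2 * UU N t \<ge> c0" by simp
    then show ?thesis using J2_eqU[OF sub[OF t]] good(1)[OF t] by (simp add: c0_def)
  qed
  have d1': "\<And>x. x \<in> {s0<..<T} \<Longrightarrow> (J has_real_derivative J1 x) (at x)" using dJ sub by blast
  have d2': "\<And>x. x \<in> {s0<..<T} \<Longrightarrow> (J1 has_real_derivative J2 x) (at x)" using dJ1 sub by blast
  have p': "\<And>x. x \<in> {s0<..<T} \<Longrightarrow> J x > 0" using J_pos sub by blast
  have J1neg: "J1 t \<le> 0" if t: "t \<in> {s0<..<T}" for t
    using conv_decreasing[OF d1' d2' p' J2pos J_lim t] .
  define c1 where "c1 = 4 * \<bar>Hc\<bar> + 4 * Rb"
  have c1: "c1 \<ge> 0" using Rb_nonneg by (simp add: c1_def)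
  have ode: "2 * J t * J2 t - J1 t ^ 2 / 2 \<ge> 0 - c1 * J t" if t: "t \<in> {s0<..<T}" for t
  proof -
    have J0: "J t \<ge> 0" by (rule J_nonneg)
    have "J2 t \<ge> P t - 2 * \<bar>Hc\<bar> - 2 * Rb" using J2_eqH[OF sub[OF t]] good(1)[OF t] by linarith
    then have "2 * J t * J2 t \<ge> 2 * J t * (P t - 2 * \<bar>Hc\<bar> - 2 * Rb)"
      using J0 by (intro mult_left_mono) auto
    moreover have "J1 t ^ 2 \<le> 4 * J t * P t" by (rule J1_sq[OF sub[OF t]])
    ultimately show ?thesis by (simp add: c1_def algebra_simps)
  qed
  define s1 where "s1 = (s0 + T) / 2"
  have s1: "s0 < s1" "s1 < T" using s0 by (auto simp: s1_def)
  define B0 where "B0 = (J1 s1 ^ 2 + 2 * 0) / sqrt (J s1) + 2 * c1 * sqrt (J s1)"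
  have Bbd: "J1 t ^ 2 \<le> B0 * sqrt (J t)" if t: "t \<in> {s1<..<T}" for t
  proof -
    have Jt: "J t > 0" using J_pos sub t s1 by auto
    have "(J1 t ^ 2 + 2 * 0) / sqrt (J t) + 2 * c1 * sqrt (J t) \<le> B0"
      unfolding B0_def by (rule ode_phi_mono[OF d1' d2' p' J1neg ode c1 s1(1)]) (use t in auto)
    moreover have "2 * c1 * sqrt (J t) \<ge> 0" using c1 J_nonneg[of t] by (intro mult_nonneg_nonneg) auto
    ultimately have "J1 t ^ 2 / sqrt (J t) \<le> B0" by simp
    then show ?thesis using Jt by (simp add: divide_le_eq)
  qed
  define K where "K = (3/4 * sqrt B0) powr (4/3)"
  have rate: "J t \<le> K * (T - t) powr (4/3)" if t: "t \<in> {s1<..<T}" for t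
  proof -
    have d1s: "\<And>x. x \<in> {s1<..<T} \<Longrightarrow> (J has_real_derivative J1 x) (at x)" using d1' s1 by auto
    have ps: "\<And>x. x \<in> {s1<..<T} \<Longrightarrow> J x > 0" using p' s1 by auto
    have ns: "\<And>x. x \<in> {s1<..<T} \<Longrightarrow> J1 x \<le> 0" using J1neg s1 by auto
    have "J t \<le> (3/4 * sqrt B0 * (T - t)) powr (4/3)"
      by (rule rate_lemma[OF d1s ps ns Bbd J_lim t])
    also have "\<dots> = K * (T - t) powr (4/3)"
      unfolding K_def using t
      by (subst powr_mult) (auto intro!: mult_nonneg_nonneg)
    finally show ?thesis .
  qed
  show ?thesis
    by (rule exI[of _ s1], rule exI[of _ K]) (use s0 s1 rate J1neg good in \<open>auto simp: K_def\<close>)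
qed

end


lemma vec_mvt_bound:
  fixes f :: "real \<Rightarrow> 'b::real_inner"
  assumes ab: "a \<le> b" and cont: "continuous_on {a..b} f"
    and der: "\<And>x. x \<in> {a<..<b} \<Longrightarrow> (f has_vector_derivative f' x) (at x)"
    and bd: "\<And>x. x \<in> {a<..<b} \<Longrightarrow> norm (f' x) \<le> B"
  shows "norm (f b - f a) \<le> B * (b - a)"
proof (cases "a = b")
  case True then show ?thesis by simp
next
  case False
  then have ab': "a < b" using ab by simp
  obtain x where x: "x \<in> {a<..<b}" and le: "norm (f b - f a) \<le> norm ((\<lambda>h. h *\<^sub>R f' x) (b - a))"
    using mvt_general[OF ab' cont, of "\<lambda>x h. h *\<^sub>R f' x"] der[unfolded has_vector_derivative_def] by force
  have "norm ((\<lambda>h. h *\<^sub>R f' x) (b - a)) = (b - a) * norm (f' x)" using ab by simp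
  also have "\<dots> \<le> (b - a) * B" using bd[OF x] ab by (intro mult_left_mono) auto
  finally show ?thesis using le by (simp add: mult.commute)
qed

lemma cmass_vderiv:
  assumes "\<And>i. i \<in> G \<Longrightarrow> ((\<lambda>s. x s i) has_vector_derivative x' i) (at t)"
  shows "((\<lambda>s. cmass m G (x s)) has_vector_derivative cmass m G x') (at t)"
proof -
  have "((\<lambda>s. \<Sum>i\<in>G. m i *\<^sub>R x s i) has_vector_derivative (\<Sum>i\<in>G. m i *\<^sub>R x' i)) (at t)"
    by (intro has_vector_derivative_sum bounded_linear.has_vector_derivative[OF bounded_linear_scaleR_right] assms)
  then show ?thesis unfolding cmass_def
    by (rule bounded_linear.has_vector_derivative[OF bounded_linear_scaleR_right])
qed

locale nbc = nb +
  fixes cr :: "'a \<Rightarrow> 'a \<Rightarrow> 'b::real_inner"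
  assumes cr_bil: "bounded_bilinear cr"
    and crI: "\<And>x v. (x \<bullet> v)^2 + (norm (cr x v))^2 \<le> (norm x)^2 * (norm v)^2"
begin

lemma cr_self: "cr x x = 0"
proof -
  have "(x \<bullet> x)^2 = (norm x)^2 * (norm x)^2" by (simp add: dot_square_norm)
  then have "(norm (cr x x))^2 \<le> 0" using crI[of x x] by simp
  then show ?thesis by simp
qed

lemma cr_norm: "norm (cr x v) \<le> norm x * norm v"
proof -
  have "(norm (cr x v))^2 \<le> (norm x * norm v)^2" using crI[of x v] by (simp add: power_mult_distrib) (smt (verit) zero_le_power2)
  then show ?thesis by (rule power2_le_imp_le) simp
qed

lemma cr_scale_right: "cr x (c *\<^sub>R y) = c *\<^sub>R cr x y"
  by (rule bounded_bilinear.scaleR_right[OF cr_bil])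
lemma cr_scale_left: "cr (c *\<^sub>R x) y = c *\<^sub>R cr x y"
  by (rule bounded_bilinear.scaleR_left[OF cr_bil])
lemma cr_diff_left: "cr (x - z) y = cr x y - cr z y"
  by (rule bounded_bilinear.diff_left[OF cr_bil])
lemma cr_diff_right: "cr x (y - z) = cr x y - cr x z"
  by (rule bounded_bilinear.diff_right[OF cr_bil])
lemma cr_add_left: "cr (x + z) y = cr x y + cr z y"
  by (rule bounded_bilinear.add_left[OF cr_bil])
lemma cr_add_right: "cr x (y + z) = cr x y + cr x z"
  by (rule bounded_bilinear.add_right[OF cr_bil])
lemma cr_minus_right: "cr x (- y) = - cr x y"
  by (rule bounded_bilinear.minus_right[OF cr_bil])
lemma cr_sum_left: "cr (\<Sum>i\<in>S. f i) y = (\<Sum>i\<in>S. cr (f i) y)"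
  by (rule bounded_bilinear.sum_left[OF cr_bil])

definition MG where "MG = (\<Sum>i\<in>G. m i)"

lemma MG_pos: "MG > 0"
proof -
  have "G \<noteq> {}" using cardG by auto
  then show ?thesis unfolding MG_def using finG mposG by (intro sum_pos) auto
qed

definition rho where "rho t i = q t i - cmass m G (q t)"
definition u where "u t i = qd t i - cmass m G (qd t)"
definition acc where "acc t i = qdd t i - cmass m G (qdd t)"

lemma drho: "t \<in> {t0<..<T} \<Longrightarrow> i \<in> G \<Longrightarrow> ((\<lambda>s. rho s i) has_vector_derivative u t i) (at t)"
  unfolding rho_def u_def using GN
  by (intro has_vector_derivative_diff dq cmass_vderiv) auto

lemma du: "t \<in> {t0<..<T} \<Longrightarrow> i \<in> G \<Longrightarrow> ((\<lambda>s. u s i) has_vector_derivative acc t i) (at t)"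
  unfolding u_def acc_def using GN
  by (intro has_vector_derivative_diff dqd cmass_vderiv) auto

lemma rho_sum: "(\<Sum>i\<in>G. m i *\<^sub>R rho t i) = 0"
  unfolding rho_def using MG_pos cmass_sum_zero[of m G] by (simp add: MG_def)
lemma u_sum: "(\<Sum>i\<in>G. m i *\<^sub>R u t i) = 0"
  unfolding u_def using MG_pos cmass_sum_zero[of m G] by (simp add: MG_def)

definition mu where "mu t = ang_mom0 cr m G q qd t"
definition dmu where "dmu t = (\<Sum>i\<in>G. m i *\<^sub>R (cr (rho t i) (acc t i) + cr (u t i) (u t i)))"

lemma mu_eq: "mu t = (\<Sum>i\<in>G. m i *\<^sub>R cr (rho t i) (u t i))"
  by (simp add: mu_def ang_mom0_def rho_def u_def)

lemma dmu_deriv: "t \<in> {t0<..<T} \<Longrightarrow> (mu has_vector_derivative dmu t) (at t)"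
proof -
  assume t: "t \<in> {t0<..<T}"
  have "((\<lambda>s. \<Sum>i\<in>G. m i *\<^sub>R cr (rho s i) (u s i)) has_vector_derivative dmu t) (at t)"
    unfolding dmu_def
    by (intro has_vector_derivative_sum bounded_linear.has_vector_derivative[OF bounded_linear_scaleR_right]
          bounded_bilinear.has_vector_derivative[OF cr_bil] drho du t)
  then show ?thesis using mu_eq by (simp add: fun_eq_iff[symmetric] mu_eq[abs_def])
qed

definition IG where "IG t = (\<Sum>i\<in>G. m i * (rho t i \<bullet> rho t i))"
definition IG1 where "IG1 t = 2 * (\<Sum>i\<in>G. m i * (rho t i \<bullet> u t i))"
definition IG2 where "IG2 t = 2 * (\<Sum>i\<in>G. m i * (rho t i \<bullet> acc t i + u t i \<bullet> u t i))"
definition Pr where "Pr t = (\<Sum>i\<in>G. m i * (u t i \<bullet> u t i))"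
definition EG where "EG t = Pr t / 2 - UU G t"
definition fc where "fc t = (\<Sum>j\<in>N-G. m j *\<^sub>R gv (q t j - cmass m G (q t)))"
definition Bd where "Bd t i = AF (N - G) t i - fc t"

lemma dIG: "t \<in> {t0<..<T} \<Longrightarrow> (IG has_real_derivative IG1 t) (at t)"
proof -
  assume t: "t \<in> {t0<..<T}"
  have "(IG has_real_derivative (\<Sum>i\<in>G. m i * (rho t i \<bullet> u t i + u t i \<bullet> rho t i))) (at t)"
    unfolding IG_def[abs_def] by (rule deriv_sum_inner) (use drho t in auto)
  then show ?thesis by (simp add: IG1_def inner_commute sum_distrib_left algebra_simps)
qed

lemma dIG1: "t \<in> {t0<..<T} \<Longrightarrow> (IG1 has_real_derivative IG2 t) (at t)"
proof -
  assume t: "t \<in> {t0<..<T}"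
  have "((\<lambda>s. \<Sum>i\<in>G. m i * (rho s i \<bullet> u s i)) has_real_derivative
      (\<Sum>i\<in>G. m i * (rho t i \<bullet> acc t i + u t i \<bullet> u t i))) (at t)"
    by (rule deriv_sum_inner) (use drho du t in auto)
  then show ?thesis unfolding IG1_def[abs_def] IG2_def by (rule DERIV_cmult)
qed

lemma qdd_split: "t \<in> {t0..<T} \<Longrightarrow> i \<in> G \<Longrightarrow> qdd t i = AF G t i + AF (N - G) t i"
proof -
  assume t: "t \<in> {t0..<T}" and i: "i \<in> G"
  have iN: "i \<in> N" using i GN by auto
  have "N - {i} = (G - {i}) \<union> ((N - G) - {i})" using GN i by auto
  moreover have "(G - {i}) \<inter> ((N - G) - {i}) = {}" by auto
  ultimately have "(\<Sum>j\<in>N-{i}. m j *\<^sub>R gv (q t j - q t i))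
      = (\<Sum>j\<in>G-{i}. m j *\<^sub>R gv (q t j - q t i)) + (\<Sum>j\<in>(N-G)-{i}. m j *\<^sub>R gv (q t j - q t i))"
    using finG by (simp add: sum.union_disjoint)
  then show ?thesis using force'[OF t iN] by (simp add: AF_def)
qed

lemma AF_sum_zeroG: "(\<Sum>i\<in>G. m i *\<^sub>R AF G t i) = 0"
  by (rule AF_sum_zero[OF GN])

lemma cross_virial:
  "(\<Sum>i\<in>G. m i *\<^sub>R cr (q t i - c) (AF G t i)) = 0"
proof -
  define F where "F i j = (m i * m j) *\<^sub>R cr (q t i - c) (gv (q t j - q t i))" for i j
  have "(\<Sum>i\<in>G. m i *\<^sub>R cr (q t i - c) (AF G t i)) = (\<Sum>i\<in>G. \<Sum>j\<in>G-{i}. F i j)"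
    by (simp add: AF_def F_def bounded_bilinear.sum_right[OF cr_bil] cr_scale_right scaleR_sum_right)
  also have "\<dots> = (1/2) *\<^sub>R (\<Sum>i\<in>G. \<Sum>j\<in>G-{i}. F i j + F j i)"
    by (rule pair_sym_half[OF finG])
  also have "(\<Sum>i\<in>G. \<Sum>j\<in>G-{i}. F i j + F j i) = 0"
  proof (intro sum.neutral ballI)
    fix i j
    have "F i j + F j i = (m i * m j) *\<^sub>R (cr (q t i - c) (gv (q t j - q t i)) - cr (q t j - c) (gv (q t j - q t i)))"
      unfolding F_def gv_minus[of "q t i" "q t j"] by (simp add: cr_minus_right algebra_simps)
    also have "cr (q t i - c) (gv (q t j - q t i)) - cr (q t j - c) (gv (q t j - q t i))
        = cr ((q t i - c) - (q t j - c)) (gv (q t j - q t i))" by (simp only: cr_diff_left)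
    also have "(q t i - c) - (q t j - c) = - (q t j - q t i)" by simp
    also have "cr (- (q t j - q t i)) (gv (q t j - q t i)) = 0"
      unfolding gv_def cr_scale_right
      using bounded_bilinear.minus_left[OF cr_bil, of "q t j - q t i"] cr_self by simp
    finally show "F i j + F j i = 0" by simp
  qed
  finally show ?thesis by simp
qed

end


context nbc
begin

lemma rho_inner_const: "(\<Sum>i\<in>G. m i * (rho t i \<bullet> v)) = 0"
proof -
  have "(\<Sum>i\<in>G. m i * (rho t i \<bullet> v)) = (\<Sum>i\<in>G. m i *\<^sub>R rho t i) \<bullet> v" by (simp add: inner_sum_left)
  then show ?thesis by (simp add: rho_sum)
qed

lemma u_inner_const: "(\<Sum>i\<in>G. m i * (u t i \<bullet> v)) = 0"
proof -
  have "(\<Sum>i\<in>G. m i * (u t i \<bullet> v)) = (\<Sum>i\<in>G. m i *\<^sub>R u t i) \<bullet> v" by (simp add: inner_sum_left)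
  then show ?thesis by (simp add: u_sum)
qed

lemma rho_cr_const: "(\<Sum>i\<in>G. m i *\<^sub>R cr (rho t i) v) = 0"
proof -
  have "(\<Sum>i\<in>G. m i *\<^sub>R cr (rho t i) v) = cr (\<Sum>i\<in>G. m i *\<^sub>R rho t i) v"
    by (simp add: cr_sum_left cr_scale_left)
  then show ?thesis by (simp add: rho_sum bounded_bilinear.zero_left[OF cr_bil])
qed

lemma sum_rho_acc:
  assumes t: "t \<in> {t0<..<T}"
  shows "(\<Sum>i\<in>G. m i * (rho t i \<bullet> acc t i)) = - UU G t + (\<Sum>i\<in>G. m i * (rho t i \<bullet> Bd t i))"
proof -
  have t': "t \<in> {t0..<T}" using t by auto
  have "(\<Sum>i\<in>G. m i * (rho t i \<bullet> acc t i)) = (\<Sum>i\<in>G. m i * (rho t i \<bullet> qdd t i)) - (\<Sum>i\<in>G. m i * (rho t i \<bullet> cmass m G (qdd t)))"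
    by (simp add: acc_def inner_diff_right right_diff_distrib sum_subtractf)
  also have "(\<Sum>i\<in>G. m i * (rho t i \<bullet> cmass m G (qdd t))) = 0" by (rule rho_inner_const)
  also have "(\<Sum>i\<in>G. m i * (rho t i \<bullet> qdd t i)) = (\<Sum>i\<in>G. m i * (rho t i \<bullet> AF G t i)) + (\<Sum>i\<in>G. m i * (rho t i \<bullet> AF (N - G) t i))"
    by (simp add: qdd_split[OF t'] inner_add_right distrib_left sum.distrib)
  also have "(\<Sum>i\<in>G. m i * (rho t i \<bullet> AF G t i)) = - UU G t"
  proof -
    have "(\<Sum>i\<in>G. m i * ((q t i - (\<lambda>_. cmass m G (q t)) i) \<bullet> AF G t i))
      = - UU G t + (1/2) * (\<Sum>i\<in>G. \<Sum>j\<in>G-{i}. m i * m j * (((\<lambda>_. cmass m G (q t)) j - (\<lambda>_. cmass m G (q t)) i) \<bullet> gv (q t j - q t i)))"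
      by (rule virial[OF GN t'])
    then show ?thesis by (simp add: rho_def)
  qed
  also have "(\<Sum>i\<in>G. m i * (rho t i \<bullet> AF (N - G) t i)) = (\<Sum>i\<in>G. m i * (rho t i \<bullet> Bd t i)) + (\<Sum>i\<in>G. m i * (rho t i \<bullet> fc t))"
    by (simp add: Bd_def inner_diff_right right_diff_distrib sum_subtractf)
  also have "(\<Sum>i\<in>G. m i * (rho t i \<bullet> fc t)) = 0" by (rule rho_inner_const)
  finally show ?thesis by simp
qed

lemma IG2_eq: "t \<in> {t0<..<T} \<Longrightarrow> IG2 t = 2 * Pr t - 2 * UU G t + 2 * (\<Sum>i\<in>G. m i * (rho t i \<bullet> Bd t i))"
proof -
  assume t: "t \<in> {t0<..<T}"
  have "IG2 t = 2 * (\<Sum>i\<in>G. m i * (rho t i \<bullet> acc t i)) + 2 * Pr t"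
    by (simp add: IG2_def Pr_def distrib_left sum.distrib)
  then show ?thesis using sum_rho_acc[OF t] by simp
qed

lemma dEG: "t \<in> {t0<..<T} \<Longrightarrow> (EG has_real_derivative (\<Sum>i\<in>G. m i * (u t i \<bullet> Bd t i))) (at t)"
proof -
  assume t: "t \<in> {t0<..<T}"
  have t': "t \<in> {t0..<T}" using t by auto
  have "(Pr has_real_derivative (\<Sum>i\<in>G. m i * (u t i \<bullet> acc t i + acc t i \<bullet> u t i))) (at t)"
    unfolding Pr_def[abs_def] by (rule deriv_sum_inner) (use du t in auto)
  then have "(EG has_real_derivative (\<Sum>i\<in>G. m i * (u t i \<bullet> acc t i + acc t i \<bullet> u t i)) / 2
      - (\<Sum>i\<in>G. m i * (qd t i \<bullet> AF G t i))) (at t)"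
    unfolding EG_def[abs_def] by (intro DERIV_diff DERIV_cdivide dUU[OF GN t])
  moreover have "(\<Sum>i\<in>G. m i * (u t i \<bullet> acc t i + acc t i \<bullet> u t i)) / 2 - (\<Sum>i\<in>G. m i * (qd t i \<bullet> AF G t i))
      = (\<Sum>i\<in>G. m i * (u t i \<bullet> Bd t i))"
  proof -
    have a: "(\<Sum>i\<in>G. m i * (u t i \<bullet> acc t i + acc t i \<bullet> u t i)) / 2 = (\<Sum>i\<in>G. m i * (u t i \<bullet> acc t i))"
      by (simp add: inner_commute sum_divide_distrib)
    have b: "(\<Sum>i\<in>G. m i * (u t i \<bullet> acc t i)) = (\<Sum>i\<in>G. m i * (u t i \<bullet> qdd t i))"
    proof -
      have "(\<Sum>i\<in>G. m i * (u t i \<bullet> acc t i)) = (\<Sum>i\<in>G. m i * (u t i \<bullet> qdd t i)) - (\<Sum>i\<in>G. m i * (u t i \<bullet> cmass m G (qdd t)))"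
        by (simp add: acc_def inner_diff_right right_diff_distrib sum_subtractf)
      then show ?thesis by (simp add: u_inner_const)
    qed
    have c: "(\<Sum>i\<in>G. m i * (u t i \<bullet> qdd t i)) = (\<Sum>i\<in>G. m i * (u t i \<bullet> AF G t i)) + (\<Sum>i\<in>G. m i * (u t i \<bullet> Bd t i))"
    proof -
      have "(\<Sum>i\<in>G. m i * (u t i \<bullet> qdd t i)) = (\<Sum>i\<in>G. m i * (u t i \<bullet> AF G t i)) + (\<Sum>i\<in>G. m i * (u t i \<bullet> AF (N - G) t i))"
        by (simp add: qdd_split[OF t'] inner_add_right distrib_left sum.distrib)
      moreover have "(\<Sum>i\<in>G. m i * (u t i \<bullet> AF (N - G) t i)) = (\<Sum>i\<in>G. m i * (u t i \<bullet> Bd t i)) + (\<Sum>i\<in>G. m i * (u t i \<bullet> fc t))"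
        by (simp add: Bd_def inner_diff_right right_diff_distrib sum_subtractf)
      ultimately show ?thesis by (simp add: u_inner_const)
    qed
    have d: "(\<Sum>i\<in>G. m i * (qd t i \<bullet> AF G t i)) = (\<Sum>i\<in>G. m i * (u t i \<bullet> AF G t i))"
    proof -
      have "(\<Sum>i\<in>G. m i * (qd t i \<bullet> AF G t i)) = (\<Sum>i\<in>G. m i * (u t i \<bullet> AF G t i)) + (\<Sum>i\<in>G. m i * (cmass m G (qd t) \<bullet> AF G t i))"
        by (simp add: u_def inner_diff_left right_diff_distrib sum_subtractf)
      also have "(\<Sum>i\<in>G. m i * (cmass m G (qd t) \<bullet> AF G t i)) = cmass m G (qd t) \<bullet> (\<Sum>i\<in>G. m i *\<^sub>R AF G t i)"
        by (simp add: inner_sum_right)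
      also have "\<dots> = 0" by (simp add: AF_sum_zeroG)
      finally show ?thesis by simp
    qed
    show ?thesis unfolding a b c d by simp
  qed
  ultimately show ?thesis by simp
qed

lemma dmu_eq: "t \<in> {t0<..<T} \<Longrightarrow> dmu t = (\<Sum>i\<in>G. m i *\<^sub>R cr (rho t i) (Bd t i))"
proof -
  assume t: "t \<in> {t0<..<T}"
  have t': "t \<in> {t0..<T}" using t by auto
  have "dmu t = (\<Sum>i\<in>G. m i *\<^sub>R cr (rho t i) (acc t i))"
    by (simp add: dmu_def cr_self)
  also have "\<dots> = (\<Sum>i\<in>G. m i *\<^sub>R cr (rho t i) (qdd t i)) - (\<Sum>i\<in>G. m i *\<^sub>R cr (rho t i) (cmass m G (qdd t)))"
    by (simp add: acc_def cr_diff_right scaleR_diff_right sum_subtractf)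
  also have "(\<Sum>i\<in>G. m i *\<^sub>R cr (rho t i) (cmass m G (qdd t))) = 0" by (rule rho_cr_const)
  also have "(\<Sum>i\<in>G. m i *\<^sub>R cr (rho t i) (qdd t i))
      = (\<Sum>i\<in>G. m i *\<^sub>R cr (rho t i) (AF G t i)) + (\<Sum>i\<in>G. m i *\<^sub>R cr (rho t i) (Bd t i)) + (\<Sum>i\<in>G. m i *\<^sub>R cr (rho t i) (fc t))"
    by (simp add: qdd_split[OF t'] Bd_def cr_add_right cr_diff_right scaleR_add_right scaleR_diff_right sum.distrib sum_subtractf)
  also have "(\<Sum>i\<in>G. m i *\<^sub>R cr (rho t i) (AF G t i)) = 0"
    unfolding rho_def by (rule cross_virial)
  also have "(\<Sum>i\<in>G. m i *\<^sub>R cr (rho t i) (fc t)) = 0" by (rule rho_cr_const)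
  finally show ?thesis by simp
qed

end


context nbc
begin

lemma limG: "i \<in> G \<Longrightarrow> ((\<lambda>t. q t i) \<longlongrightarrow> LG) (at_left T)"
  using limL[of i] LGi[of i] GN by auto

lemma cmass_lim: "((\<lambda>t. cmass m G (q t)) \<longlongrightarrow> LG) (at_left T)"
proof -
  have "((\<lambda>t. (1 / (\<Sum>i\<in>G. m i)) *\<^sub>R (\<Sum>i\<in>G. m i *\<^sub>R q t i)) \<longlongrightarrow> (1 / (\<Sum>i\<in>G. m i)) *\<^sub>R (\<Sum>i\<in>G. m i *\<^sub>R LG)) (at_left T)"
    by (intro tendsto_scaleR tendsto_const tendsto_sum) (use limG in auto)
  moreover have "(1 / (\<Sum>i\<in>G. m i)) *\<^sub>R (\<Sum>i\<in>G. m i *\<^sub>R LG) = LG"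
    using MG_pos by (simp add: MG_def scaleR_sum_left[symmetric])
  ultimately show ?thesis by (simp add: cmass_def)
qed

definition dj where "dj j = norm (L j - LG) / 2"
definition Kl where "Kl = (\<Sum>j\<in>N-G. m j * (4 / dj j ^ 3))"

lemma dj_pos: "j \<in> N - G \<Longrightarrow> dj j > 0"
  using LGj by (auto simp: dj_def)

lemma Kl_nonneg: "Kl \<ge> 0"
  unfolding Kl_def
proof (rule sum_nonneg)
  fix j assume j: "j \<in> N - G"
  have "m j > 0" "dj j > 0" using mpos dj_pos[OF j] j by auto
  then show "m j * (4 / dj j ^ 3) \<ge> 0" by simp
qed

lemma far_ev: "eventually (\<lambda>t. \<forall>j\<in>N-G. (\<forall>i\<in>G. norm (q t j - q t i) \<ge> dj j) \<and> norm (q t j - cmass m G (q t)) \<ge> dj j) (at_left T)"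
proof (rule eventually_ball_finite)
  show "finite (N - G)" by simp
  show "\<forall>j\<in>N-G. eventually (\<lambda>t. (\<forall>i\<in>G. norm (q t j - q t i) \<ge> dj j) \<and> norm (q t j - cmass m G (q t)) \<ge> dj j) (at_left T)"
  proof
    fix j assume j: "j \<in> N - G"
    have d: "dj j > 0" by (rule dj_pos[OF j])
    have lt: "dj j < norm (L j - LG)" using d by (simp add: dj_def)
    have e1: "eventually (\<lambda>t. norm (q t j - cmass m G (q t)) \<ge> dj j) (at_left T)"
    proof -
      have "((\<lambda>t. norm (q t j - cmass m G (q t))) \<longlongrightarrow> norm (L j - LG)) (at_left T)"
        by (intro tendsto_norm tendsto_diff limL cmass_lim) (use j in auto)
      from order_tendstoD(1)[OF this lt] show ?thesis by (rule eventually_mono) simp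
    qed
    have e2: "eventually (\<lambda>t. \<forall>i\<in>G. norm (q t j - q t i) \<ge> dj j) (at_left T)"
    proof (rule eventually_ball_finite[OF finG], rule ballI)
      fix i assume i: "i \<in> G"
      have "((\<lambda>t. norm (q t j - q t i)) \<longlongrightarrow> norm (L j - LG)) (at_left T)"
        by (intro tendsto_norm tendsto_diff limL limG) (use j i in auto)
      from order_tendstoD(1)[OF this lt] show "eventually (\<lambda>t. norm (q t j - q t i) \<ge> dj j) (at_left T)"
        by (rule eventually_mono) simp
    qed
    show "eventually (\<lambda>t. (\<forall>i\<in>G. norm (q t j - q t i) \<ge> dj j) \<and> norm (q t j - cmass m G (q t)) \<ge> dj j) (at_left T)"
      using e1 e2 by (rule eventually_conj[rotated])
  qed
qed

lemma Bd_bound: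
  assumes far: "\<forall>j\<in>N-G. (\<forall>i\<in>G. norm (q t j - q t i) \<ge> dj j) \<and> norm (q t j - cmass m G (q t)) \<ge> dj j"
    and i: "i \<in> G"
  shows "norm (Bd t i) \<le> Kl * norm (rho t i)"
proof -
  have e: "(N - G) - {i} = N - G" using i by auto
  have "Bd t i = (\<Sum>j\<in>N-G. m j *\<^sub>R (gv (q t j - q t i) - gv (q t j - cmass m G (q t))))"
    unfolding Bd_def AF_def fc_def e by (simp add: scaleR_diff_right sum_subtractf)
  also have "norm \<dots> \<le> (\<Sum>j\<in>N-G. norm (m j *\<^sub>R (gv (q t j - q t i) - gv (q t j - cmass m G (q t)))))"
    by (rule norm_sum)
  also have "\<dots> \<le> (\<Sum>j\<in>N-G. m j * (4 / dj j ^ 3) * norm (rho t i))"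
  proof (rule sum_mono)
    fix j assume j: "j \<in> N - G"
    have mj: "m j > 0" using mpos j by auto
    have "norm (gv (q t j - q t i) - gv (q t j - cmass m G (q t))) \<le> 4 / dj j ^ 3 * norm ((q t j - q t i) - (q t j - cmass m G (q t)))"
      by (rule gv_lip) (use dj_pos[OF j] far j i in auto)
    also have "norm ((q t j - q t i) - (q t j - cmass m G (q t))) = norm (rho t i)"
      by (simp add: rho_def norm_minus_commute)
    finally have X: "norm (gv (q t j - q t i) - gv (q t j - cmass m G (q t))) \<le> 4 / dj j ^ 3 * norm (rho t i)" .
    have "norm (m j *\<^sub>R (gv (q t j - q t i) - gv (q t j - cmass m G (q t))))
        = m j * norm (gv (q t j - q t i) - gv (q t j - cmass m G (q t)))" using mj by simp
    also have "\<dots> \<le> m j * (4 / dj j ^ 3 * norm (rho t i))" using X mj by (intro mult_left_mono) auto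
    finally show "norm (m j *\<^sub>R (gv (q t j - q t i) - gv (q t j - cmass m G (q t)))) \<le> m j * (4 / dj j ^ 3) * norm (rho t i)"
      by (simp add: mult.assoc)
  qed
  also have "\<dots> = Kl * norm (rho t i)" by (simp add: Kl_def sum_distrib_right)
  finally show ?thesis .
qed

lemma IG_alt: "IG t = (\<Sum>i\<in>G. m i * (norm (rho t i))^2)"
  by (simp add: IG_def power2_norm_eq_inner)

lemma Pr_alt: "Pr t = (\<Sum>i\<in>G. m i * (norm (u t i))^2)"
  by (simp add: Pr_def power2_norm_eq_inner)

lemma IG_nonneg: "IG t \<ge> 0"
  unfolding IG_alt using mposG by (intro sum_nonneg mult_nonneg_nonneg) (auto simp: less_imp_le)

lemma Pr_nonneg: "Pr t \<ge> 0"
  unfolding Pr_alt using mposG by (intro sum_nonneg mult_nonneg_nonneg) (auto simp: less_imp_le)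

lemma IG_le_J: "IG t \<le> J t"
proof -
  have "IG t \<le> (\<Sum>i\<in>G. m i * (norm (q t i - LG))^2)"
    unfolding IG_alt rho_def using MG_pos mposG by (intro cmass_var_le) (auto simp: MG_def less_imp_le)
  also have "\<dots> = (\<Sum>i\<in>G. m i * ((q t i - L i) \<bullet> (q t i - L i)))"
    using LGi by (simp add: power2_norm_eq_inner)
  also have "\<dots> \<le> J t"
    unfolding J_def using GN mpos by (intro sum_mono2) (auto intro!: mult_nonneg_nonneg simp: less_imp_le)
  finally show ?thesis .
qed

lemma Pr_le_P: "Pr t \<le> P t"
proof -
  have "Pr t \<le> (\<Sum>i\<in>G. m i * (norm (qd t i - 0))^2)"
    unfolding Pr_alt u_def using MG_pos mposG by (intro cmass_var_le) (auto simp: MG_def less_imp_le)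
  also have "\<dots> = (\<Sum>i\<in>G. m i * (qd t i \<bullet> qd t i))"
    by (simp add: power2_norm_eq_inner)
  also have "\<dots> \<le> P t"
    unfolding P_def using GN mpos by (intro sum_mono2) (auto intro!: mult_nonneg_nonneg simp: less_imp_le)
  finally show ?thesis .
qed

lemma IG_pos: "t \<in> {t0<..<T} \<Longrightarrow> IG t > 0"
proof (rule ccontr)
  assume t: "t \<in> {t0<..<T}" and "\<not> IG t > 0"
  then have "IG t = 0" using IG_nonneg[of t] by simp
  then have z: "\<forall>i\<in>G. m i * (rho t i \<bullet> rho t i) = 0"
    unfolding IG_def using mposG finG by (subst sum_nonneg_eq_0_iff[symmetric]) (auto intro!: mult_nonneg_nonneg simp: less_imp_le)
  have "m ga * (rho t ga \<bullet> rho t ga) = 0" using z gab by blast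
  then have "rho t ga = 0" using mposG[OF gab(1)] by simp
  moreover have "m gb * (rho t gb \<bullet> rho t gb) = 0" using z gab by blast
  then have "rho t gb = 0" using mposG[OF gab(2)] by simp
  ultimately have "q t ga = q t gb" by (simp add: rho_def)
  moreover have "q t ga \<noteq> q t gb" using distinct[of t ga gb] t gab gabN by auto
  ultimately show False by simp
qed

lemma IG_lim: "(IG \<longlongrightarrow> 0) (at_left T)"
proof -
  have "((\<lambda>t. \<Sum>i\<in>G. m i * ((q t i - cmass m G (q t)) \<bullet> (q t i - cmass m G (q t)))) \<longlongrightarrow>
      (\<Sum>i\<in>G. m i * ((LG - LG) \<bullet> (LG - LG)))) (at_left T)"
    by (intro tendsto_sum tendsto_mult tendsto_const tendsto_inner tendsto_diff limL cmass_lim)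
       (use limG in auto)
  then show ?thesis by (simp add: IG_def[abs_def] rho_def)
qed

lemma sum_rho_Bd:
  assumes far: "\<forall>j\<in>N-G. (\<forall>i\<in>G. norm (q t j - q t i) \<ge> dj j) \<and> norm (q t j - cmass m G (q t)) \<ge> dj j"
  shows "\<bar>\<Sum>i\<in>G. m i * (rho t i \<bullet> Bd t i)\<bar> \<le> Kl * IG t"
proof -
  have "\<bar>\<Sum>i\<in>G. m i * (rho t i \<bullet> Bd t i)\<bar> \<le> (\<Sum>i\<in>G. \<bar>m i * (rho t i \<bullet> Bd t i)\<bar>)" by (rule sum_abs)
  also have "\<dots> \<le> (\<Sum>i\<in>G. m i * (Kl * (norm (rho t i))^2))"
  proof (rule sum_mono)
    fix i assume i: "i \<in> G"
    have "\<bar>rho t i \<bullet> Bd t i\<bar> \<le> norm (rho t i) * norm (Bd t i)" by (rule Cauchy_Schwarz_ineq2)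
    also have "\<dots> \<le> norm (rho t i) * (Kl * norm (rho t i))"
      by (intro mult_left_mono Bd_bound[OF far i]) auto
    finally show "\<bar>m i * (rho t i \<bullet> Bd t i)\<bar> \<le> m i * (Kl * (norm (rho t i))^2)"
      using mposG[OF i] by (simp add: abs_mult power2_eq_square mult_left_mono algebra_simps)
  qed
  also have "\<dots> = Kl * IG t" by (simp add: IG_alt sum_distrib_left algebra_simps)
  finally show ?thesis .
qed

lemma dmu_bound:
  assumes t: "t \<in> {t0<..<T}"
    and far: "\<forall>j\<in>N-G. (\<forall>i\<in>G. norm (q t j - q t i) \<ge> dj j) \<and> norm (q t j - cmass m G (q t)) \<ge> dj j"
  shows "norm (dmu t) \<le> Kl * IG t"
proof -
  have "norm (dmu t) \<le> (\<Sum>i\<in>G. norm (m i *\<^sub>R cr (rho t i) (Bd t i)))"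
    unfolding dmu_eq[OF t] by (rule norm_sum)
  also have "\<dots> \<le> (\<Sum>i\<in>G. m i * (Kl * (norm (rho t i))^2))"
  proof (rule sum_mono)
    fix i assume i: "i \<in> G"
    have "norm (cr (rho t i) (Bd t i)) \<le> norm (rho t i) * norm (Bd t i)" by (rule cr_norm)
    also have "\<dots> \<le> norm (rho t i) * (Kl * norm (rho t i))"
      by (intro mult_left_mono Bd_bound[OF far i]) auto
    finally show "norm (m i *\<^sub>R cr (rho t i) (Bd t i)) \<le> m i * (Kl * (norm (rho t i))^2)"
      using mposG[OF i] by (simp add: power2_eq_square mult_left_mono algebra_simps)
  qed
  also have "\<dots> = Kl * IG t" by (simp add: IG_alt sum_distrib_left algebra_simps)
  finally show ?thesis .
qed

lemma dEG_lower:
  assumes far: "\<forall>j\<in>N-G. (\<forall>i\<in>G. norm (q t j - q t i) \<ge> dj j) \<and> norm (q t j - cmass m G (q t)) \<ge> dj j"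
    and IG1: "IG t \<le> 1"
  shows "(\<Sum>i\<in>G. m i * (u t i \<bullet> Bd t i)) \<ge> - Kl * (1 + Pr t)"
proof -
  have "\<bar>\<Sum>i\<in>G. m i * (u t i \<bullet> Bd t i)\<bar> \<le> (\<Sum>i\<in>G. \<bar>m i * (u t i \<bullet> Bd t i)\<bar>)" by (rule sum_abs)
  also have "\<dots> \<le> (\<Sum>i\<in>G. m i * norm (u t i) * (Kl * norm (rho t i)))"
  proof (rule sum_mono)
    fix i assume i: "i \<in> G"
    have "\<bar>u t i \<bullet> Bd t i\<bar> \<le> norm (u t i) * norm (Bd t i)" by (rule Cauchy_Schwarz_ineq2)
    also have "\<dots> \<le> norm (u t i) * (Kl * norm (rho t i))"
      by (intro mult_left_mono Bd_bound[OF far i]) auto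
    finally show "\<bar>m i * (u t i \<bullet> Bd t i)\<bar> \<le> m i * norm (u t i) * (Kl * norm (rho t i))"
      using mposG[OF i] by (simp add: abs_mult mult_left_mono mult.assoc)
  qed
  also have "\<dots> = Kl * (\<Sum>i\<in>G. m i * norm (u t i) * norm (rho t i))"
    by (simp add: sum_distrib_left algebra_simps)
  also have "(\<Sum>i\<in>G. m i * norm (u t i) * norm (rho t i)) \<le> 1 + Pr t"
  proof -
    have "(\<Sum>i\<in>G. m i * norm (u t i) * norm (rho t i))^2 \<le> Pr t * IG t"
      unfolding Pr_alt IG_alt by (rule weighted_cs) (use mposG in \<open>auto simp: less_imp_le\<close>)
    also have "\<dots> \<le> Pr t" using IG1 Pr_nonneg[of t] IG_nonneg[of t] by (simp add: mult_left_le)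
    also have "\<dots> \<le> (1 + Pr t)^2" using Pr_nonneg[of t] by (simp add: power2_eq_square algebra_simps)
    finally have "(\<Sum>i\<in>G. m i * norm (u t i) * norm (rho t i))^2 \<le> (1 + Pr t)^2" .
    then show ?thesis by (rule power2_le_imp_le) (use Pr_nonneg[of t] in simp)
  qed
  finally have "\<bar>\<Sum>i\<in>G. m i * (u t i \<bullet> Bd t i)\<bar> \<le> Kl * (1 + Pr t)"
    using Kl_nonneg by (meson mult_left_mono order_trans)
  then show ?thesis by linarith
qed

end


lemma powr_tail: "(x::real) > 0 \<Longrightarrow> x powr (4/3) * x = x powr (7/3)"
proof -
  assume x: "x > 0"
  have "x powr (7/3) = x powr (4/3 + 1)" by simp
  also have "\<dots> = x powr (4/3) * x powr 1" by (rule powr_add)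
  also have "x powr 1 = x" using x by simp
  finally show ?thesis by simp
qed

context nbc
begin

lemma mu_diff_bound:
  assumes bd: "\<And>x. x \<in> {t<..<t'} \<Longrightarrow> norm (dmu x) \<le> C * (T - x) powr (4/3)"
    and C: "C \<ge> 0" and t: "t0 < t" "t \<le> t'" "t' < T"
  shows "norm (mu t' - mu t) \<le> C * (T - t) powr (7/3)"
proof -
  have "norm (mu t' - mu t) \<le> (C * (T - t) powr (4/3)) * (t' - t)"
  proof (rule vec_mvt_bound[OF t(2)])
    show "continuous_on {t..t'} mu"
    proof (intro continuous_at_imp_continuous_on ballI)
      fix x assume "x \<in> {t..t'}"
      then have "x \<in> {t0<..<T}" using t by auto
      from dmu_deriv[OF this] show "isCont mu x" by (rule has_vector_derivative_continuous)
    qed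
    fix x assume x: "x \<in> {t<..<t'}"
    show "(mu has_vector_derivative dmu x) (at x)" using dmu_deriv x t by auto
    have "C * (T - x) powr (4/3) \<le> C * (T - t) powr (4/3)"
      using x t C by (intro mult_left_mono powr_mono2) auto
    then show "norm (dmu x) \<le> C * (T - t) powr (4/3)" using bd[OF x] by linarith
  qed
  also have "\<dots> \<le> C * (T - t) powr (4/3) * (T - t)"
    using t C by (intro mult_left_mono) auto
  also have "\<dots> = C * (T - t) powr (7/3)" using t by (simp add: mult.assoc powr_tail)
  finally show ?thesis .
qed

lemma ode_contra:
  assumes a: "t0 \<le> a" "a < T"
    and ineq: "\<And>t. t \<in> {a<..<T} \<Longrightarrow> 2 * IG t * IG2 t - IG1 t ^ 2 / 2 \<ge> e - c * IG t"
    and e: "e > 0" and c: "c \<ge> 0"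
  shows False
proof -
  have ev: "eventually (\<lambda>t. IG t < e / (2 * (c + 1))) (at_left T)"
    by (rule order_tendstoD(2)[OF IG_lim]) (use e c in simp)
  obtain s4 where s4: "s4 < T" "\<forall>t\<in>{s4<..<T}. IG t < e / (2 * (c + 1))"
    using ev_interval[OF ev] by blast
  define a' where "a' = max a s4"
  have a': "t0 \<le> a'" "a' < T" using a s4 by (auto simp: a'_def)
  have sub: "t \<in> {t0<..<T}" if "t \<in> {a'<..<T}" for t using that a' by auto
  have small: "IG t < e / (2 * (c + 1))" if "t \<in> {a'<..<T}" for t using s4 that by (auto simp: a'_def)
  have ineq': "2 * IG t * IG2 t - IG1 t ^ 2 / 2 \<ge> e - c * IG t" if "t \<in> {a'<..<T}" for t
    using ineq that by (auto simp: a'_def)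
  have d1: "\<And>x. x \<in> {a'<..<T} \<Longrightarrow> (IG has_real_derivative IG1 x) (at x)" using dIG sub by blast
  have d2: "\<And>x. x \<in> {a'<..<T} \<Longrightarrow> (IG1 has_real_derivative IG2 x) (at x)" using dIG1 sub by blast
  have p: "\<And>x. x \<in> {a'<..<T} \<Longrightarrow> IG x > 0" using IG_pos sub by blast
  have cv: "IG2 x \<ge> 0" if x: "x \<in> {a'<..<T}" for x
  proof -
    have "c * IG x \<le> c * (e / (2 * (c + 1)))" using small[OF x] c by (intro mult_left_mono) auto
    also have "\<dots> \<le> (c + 1) * (e / (2 * (c + 1)))" using c e by (intro mult_right_mono) auto
    also have "\<dots> = e / 2" using c by (simp add: field_simps add_nonneg_pos)
    finally have "c * IG x \<le> e / 2" .
    then have "2 * IG x * IG2 x \<ge> e / 2" using ineq'[OF x] zero_le_power2[of "IG1 x"] by linarith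
    then have "IG x * IG2 x > 0" using e by linarith
    then show ?thesis using p[OF x] by (simp add: zero_less_mult_iff)
  qed
  have neg: "\<And>x. x \<in> {a'<..<T} \<Longrightarrow> IG1 x \<le> 0"
    using conv_decreasing[OF d1 d2 p cv IG_lim] by blast
  define s5 where "s5 = (a' + T) / 2"
  have s5: "a' < s5" "s5 < T" using a' by (auto simp: s5_def)
  define B where "B = (IG1 s5 ^ 2 + 2 * e) / sqrt (IG s5) + 2 * c * sqrt (IG s5)"
  have Bb: "2 * e / sqrt (IG x) \<le> B" if x: "x \<in> {s5<..<T}" for x
  proof -
    have "(IG1 x ^ 2 + 2 * e) / sqrt (IG x) + 2 * c * sqrt (IG x) \<le> B"
      unfolding B_def by (rule ode_phi_mono[OF d1 d2 p neg ineq' c s5(1)]) (use x in auto)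
    moreover have "2 * c * sqrt (IG x) \<ge> 0" using c IG_nonneg[of x] by (intro mult_nonneg_nonneg) auto
    moreover have "2 * e / sqrt (IG x) \<le> (IG1 x ^ 2 + 2 * e) / sqrt (IG x)"
      using p[of x] x s5 by (intro divide_right_mono) auto
    ultimately show ?thesis by linarith
  qed
  have Bpos: "B > 0"
  proof -
    have x: "(s5 + T) / 2 \<in> {s5<..<T}" using s5 by auto
    have "2 * e / sqrt (IG ((s5 + T) / 2)) > 0" using e p[of "(s5 + T) / 2"] x s5 by auto
    then show ?thesis using Bb[OF x] by linarith
  qed
  define \<delta> where "\<delta> = (2 * e / (B + 1))^2"
  have \<delta>: "\<delta> > 0" using e Bpos by (simp add: \<delta>_def)
  have ev2: "eventually (\<lambda>t. IG t < \<delta>) (at_left T)" by (rule order_tendstoD(2)[OF IG_lim \<delta>])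
  obtain s6 where s6: "s6 < T" "\<forall>t\<in>{s6<..<T}. IG t < \<delta>" using ev_interval[OF ev2] by blast
  define x where "x = (max s5 s6 + T) / 2"
  have x: "x \<in> {s5<..<T}" "x \<in> {s6<..<T}" using s5 s6 by (auto simp: x_def)
  have IGx: "IG x > 0" using p[of x] x s5 by auto
  have "sqrt (IG x) < 2 * e / (B + 1)"
  proof -
    have "sqrt (IG x) < sqrt \<delta>" using s6 x by (auto intro: real_sqrt_less_mono)
    also have "sqrt \<delta> = 2 * e / (B + 1)" using e Bpos by (simp add: \<delta>_def)
    finally show ?thesis .
  qed
  then have "sqrt (IG x) * (B + 1) < 2 * e" using Bpos by (simp add: pos_less_divide_eq)
  then have "B + 1 < 2 * e / sqrt (IG x)" using IGx by (simp add: pos_less_divide_eq mult.commute)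
  then show False using Bb[OF x(1)] by linarith
qed

end


context nbc
begin

lemma cluster_main:
  "\<exists>s C. t0 \<le> s \<and> s < T \<and> C \<ge> 0 \<and>
    (\<forall>t\<in>{s<..<T}. norm (dmu t) \<le> C * (T - t) powr (4/3) \<and> norm (mu t) \<le> C * (T - t) powr (7/3))"
proof -
  obtain sa K where sa: "t0 \<le> sa" "sa < T" "K \<ge> 0"
    and sah: "\<forall>t\<in>{sa<..<T}. J1 t \<le> 0 \<and> J t \<le> K * (T - t) powr (4/3) \<and> \<bar>Rr t\<bar> \<le> Rb"
    using J_rate by blast
  have ev: "eventually (\<lambda>t. (\<forall>j\<in>N-G. (\<forall>i\<in>G. norm (q t j - q t i) \<ge> dj j) \<and> norm (q t j - cmass m G (q t)) \<ge> dj j) \<and> J t < 1) (at_left T)"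
    using far_ev order_tendstoD(2)[OF J_lim, of 1] by (intro eventually_conj) auto
  obtain sb where sb: "sb < T"
    "\<forall>t\<in>{sb<..<T}. (\<forall>j\<in>N-G. (\<forall>i\<in>G. norm (q t j - q t i) \<ge> dj j) \<and> norm (q t j - cmass m G (q t)) \<ge> dj j) \<and> J t < 1"
    using ev_interval[OF ev] by blast
  define s where "s = max sa sb"
  have s: "t0 \<le> s" "s < T" using sa sb by (auto simp: s_def)
  have in0: "t \<in> {t0<..<T}" if "t \<in> {s<..<T}" for t using that s by auto
  have RJ1: "J1 t \<le> 0" and RJ: "J t \<le> K * (T - t) powr (4/3)" and RR: "\<bar>Rr t\<bar> \<le> Rb"
    if "t \<in> {s<..<T}" for t using sah that by (auto simp: s_def)
  have far: "\<forall>j\<in>N-G. (\<forall>i\<in>G. norm (q t j - q t i) \<ge> dj j) \<and> norm (q t j - cmass m G (q t)) \<ge> dj j"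
    and J1lt: "J t < 1" if "t \<in> {s<..<T}" for t using sb that by (auto simp: s_def)
  have IG1': "IG t \<le> 1" if "t \<in> {s<..<T}" for t using IG_le_J[of t] J1lt[OF that] by simp
  define C where "C = Kl * K"
  have C: "C \<ge> 0" using Kl_nonneg sa by (simp add: C_def)
  have dmub: "norm (dmu t) \<le> C * (T - t) powr (4/3)" if t: "t \<in> {s<..<T}" for t
  proof -
    have "norm (dmu t) \<le> Kl * IG t" by (rule dmu_bound[OF in0[OF t] far[OF t]])
    also have "\<dots> \<le> Kl * J t" using Kl_nonneg IG_le_J by (intro mult_left_mono) auto
    also have "\<dots> \<le> Kl * (K * (T - t) powr (4/3))" using Kl_nonneg RJ[OF t] by (intro mult_left_mono) auto
    finally show ?thesis by (simp add: C_def mult.assoc)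
  qed
  define c3 where "c3 = 1 + 2 * \<bar>Hc\<bar> + 2 * Rb"
  define g where "g x = EG x + Kl * (c3 * x + J1 x)" for x
  have gd: "(g has_real_derivative (\<Sum>i\<in>G. m i * (u x i \<bullet> Bd x i)) + Kl * (c3 + J2 x)) (at x)"
    if x: "x \<in> {s<..<T}" for x
  proof -
    have "((\<lambda>x. c3 * x + J1 x) has_real_derivative c3 + J2 x) (at x)"
      by (intro DERIV_add DERIV_cmult_Id dJ1 in0 x)
    then have "((\<lambda>x. Kl * (c3 * x + J1 x)) has_real_derivative Kl * (c3 + J2 x)) (at x)"
      by (rule DERIV_cmult)
    then show ?thesis unfolding g_def[abs_def] by (intro DERIV_add dEG in0 x)
  qed
  have gnn: "(\<Sum>i\<in>G. m i * (u x i \<bullet> Bd x i)) + Kl * (c3 + J2 x) \<ge> 0" if x: "x \<in> {s<..<T}" for x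
  proof -
    have a: "(\<Sum>i\<in>G. m i * (u x i \<bullet> Bd x i)) \<ge> - Kl * (1 + Pr x)" by (rule dEG_lower[OF far[OF x] IG1'[OF x]])
    have "Pr x \<le> P x" by (rule Pr_le_P)
    also have "P x = J2 x - 2 * Hc - 2 * Rr x" using J2_eqH[OF in0[OF x]] by simp
    also have "\<dots> \<le> J2 x + c3 - 1" using RR[OF x] by (simp add: c3_def)
    finally have "1 + Pr x \<le> c3 + J2 x" by simp
    then have "Kl * (1 + Pr x) \<le> Kl * (c3 + J2 x)" using Kl_nonneg by (rule mult_left_mono)
    then show ?thesis using a by simp
  qed
  define s2 where "s2 = (s + T) / 2"
  have s2: "s < s2" "s2 < T" using s by (auto simp: s2_def)
  define Eb where "Eb = \<bar>g s2 - Kl * c3 * T\<bar>"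
  have c3: "c3 \<ge> 0" using Rb_nonneg by (simp add: c3_def)
  have EGb: "EG t \<ge> - Eb" if t: "t \<in> {s2<..<T}" for t
  proof -
    have "g s2 \<le> g t"
    proof (rule mono_from_deriv[where f=g and f'="\<lambda>x. (\<Sum>i\<in>G. m i * (u x i \<bullet> Bd x i)) + Kl * (c3 + J2 x)"])
      fix x assume "x \<in> {s2..t}"
      then have x: "x \<in> {s<..<T}" using t s2 by auto
      show "(g has_real_derivative (\<Sum>i\<in>G. m i * (u x i \<bullet> Bd x i)) + Kl * (c3 + J2 x)) (at x)" by (rule gd[OF x])
    next
      fix x assume "x \<in> {s2<..<t}"
      then have x: "x \<in> {s<..<T}" using t s2 by auto
      show "(\<Sum>i\<in>G. m i * (u x i \<bullet> Bd x i)) + Kl * (c3 + J2 x) \<ge> 0" by (rule gnn[OF x])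
    qed (use t in auto)
    moreover have "Kl * J1 t \<le> 0" using Kl_nonneg RJ1[of t] t s2 by (auto simp: mult_nonneg_nonpos)
    moreover have "Kl * c3 * t \<le> Kl * c3 * T" using Kl_nonneg c3 t by (intro mult_left_mono) auto
    ultimately have "EG t \<ge> g s2 - Kl * c3 * T" by (simp add: g_def algebra_simps)
    then show ?thesis unfolding Eb_def by linarith
  qed
  define c2 where "c2 = 4 * Eb + 4 * Kl"
  have c2: "c2 \<ge> 0" using Kl_nonneg by (simp add: c2_def Eb_def)
  have IGineq: "2 * IG t * IG2 t - IG1 t ^ 2 / 2 \<ge> 2 * (norm (mu t))^2 - c2 * IG t"
    if t: "t \<in> {s2<..<T}" for t
  proof -
    have ts: "t \<in> {s<..<T}" using t s2 by auto
    define S where "S = (\<Sum>i\<in>G. m i * (rho t i \<bullet> Bd t i))"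
    define A where "A = (\<Sum>i\<in>G. m i * (rho t i \<bullet> u t i))"
    have S: "\<bar>S\<bar> \<le> Kl * IG t" unfolding S_def by (rule sum_rho_Bd[OF far[OF ts]])
    have I2: "IG2 t = Pr t + 2 * EG t + 2 * S" using IG2_eq[OF in0[OF ts]] by (simp add: EG_def S_def)
    have I1: "IG1 t = 2 * A" by (simp add: IG1_def A_def)
    have sund: "A^2 + (norm (mu t))^2 \<le> IG t * Pr t"
      unfolding A_def mu_eq IG_alt Pr_alt
      by (rule sundman_ineq[where cr=cr]) (use crI mposG in \<open>auto simp: less_imp_le\<close>)
    have IG0: "IG t \<ge> 0" by (rule IG_nonneg)
    have p1: "IG t * EG t \<ge> - IG t * Eb"
    proof -
      have "IG t * (- Eb) \<le> IG t * EG t" using EGb[OF t] IG0 by (rule mult_left_mono)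
      then show ?thesis by simp
    qed
    have "IG t * S \<ge> - IG t * (Kl * IG t)"
    proof -
      have "- (Kl * IG t) \<le> S" using S by linarith
      then have "IG t * (- (Kl * IG t)) \<le> IG t * S" using IG0 by (rule mult_left_mono)
      then show ?thesis by simp
    qed
    moreover have "IG t * (Kl * IG t) \<le> Kl * IG t"
    proof -
      have "IG t * IG t \<le> IG t" using IG1'[OF ts] IG0 by (simp add: mult_left_le)
      then have "Kl * (IG t * IG t) \<le> Kl * IG t" using Kl_nonneg by (rule mult_left_mono)
      then show ?thesis by (simp add: algebra_simps)
    qed
    ultimately have p2: "IG t * S \<ge> - (Kl * IG t)" by linarith
    have "2 * IG t * IG2 t - IG1 t ^ 2 / 2 = 2 * (IG t * Pr t) + 4 * (IG t * EG t) + 4 * (IG t * S) - 2 * A^2"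
      by (simp add: I2 I1 power2_eq_square algebra_simps)
    also have "\<dots> \<ge> 2 * (norm (mu t))^2 - c2 * IG t"
      using sund p1 p2 by (simp add: c2_def algebra_simps)
    finally show ?thesis .
  qed
  have mdb: "norm (mu t' - mu t) \<le> C * (T - t) powr (7/3)" if "s2 < t" "t \<le> t'" "t' < T" for t t'
  proof (rule mu_diff_bound[OF _ C])
    fix x assume "x \<in> {t<..<t'}"
    then have "x \<in> {s<..<T}" using that s2 by auto
    then show "norm (dmu x) \<le> C * (T - x) powr (4/3)" by (rule dmub)
  qed (use that s s2 in auto)
  have mu_lim: "(mu \<longlongrightarrow> 0) (at_left T)"
    unfolding tendsto_iff
  proof (intro allI impI)
    fix e :: real assume e: "e > 0"
    define \<epsilon> where "\<epsilon> = e / 2"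
    have \<epsilon>: "\<epsilon> > 0" using e by (simp add: \<epsilon>_def)
    have "((\<lambda>t. T - t) \<longlongrightarrow> 0) (at_left T)"
      by (rule tendsto_eq_intros) (auto intro: tendsto_ident_at)
    then have "((\<lambda>t. (T - t) powr (7/3)) \<longlongrightarrow> 0) (at_left T)"
      by (rule tendsto_zero_powrI) (auto intro!: eventually_mono[OF eventually_at_left_real[OF s(2)]])
    then have "((\<lambda>t. C * (T - t) powr (7/3)) \<longlongrightarrow> C * 0) (at_left T)" by (intro tendsto_mult tendsto_const)
    then have evA: "eventually (\<lambda>t. C * (T - t) powr (7/3) < \<epsilon>) (at_left T)"
      by (rule order_tendstoD(2)) (use \<epsilon> in simp)
    obtain s7 where s7: "s7 < T" "\<forall>t\<in>{s7<..<T}. C * (T - t) powr (7/3) < \<epsilon>"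
      using ev_interval[OF evA] by blast
    have "norm (mu t) < 2 * \<epsilon>" if t: "t \<in> {max s7 s2<..<T}" for t
    proof (rule ccontr)
      assume "\<not> norm (mu t) < 2 * \<epsilon>"
      then have big: "norm (mu t) \<ge> 2 * \<epsilon>" by simp
      have ct: "C * (T - t) powr (7/3) < \<epsilon>" using s7 t by auto
      have far_mu: "norm (mu x) \<ge> \<epsilon>" if x: "x \<in> {t<..<T}" for x
      proof -
        have "norm (mu x - mu t) \<le> C * (T - t) powr (7/3)" by (rule mdb) (use t x in auto)
        moreover have "norm (mu t) \<le> norm (mu x) + norm (mu x - mu t)"
          by (metis norm_minus_commute norm_triangle_sub)
        ultimately show ?thesis using big ct by linarith
      qed
      show False
      proof (rule ode_contra[where a=t and e="2 * \<epsilon>^2" and c=c2])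
        show "t0 \<le> t" "t < T" using t s s2 by auto
        show "2 * \<epsilon>^2 > 0" using \<epsilon> by simp
        show "c2 \<ge> 0" by (rule c2)
        fix x assume x: "x \<in> {t<..<T}"
        have "\<epsilon>^2 \<le> (norm (mu x))^2" using far_mu[OF x] \<epsilon> by (intro power_mono) auto
        moreover have "2 * IG x * IG2 x - IG1 x ^ 2 / 2 \<ge> 2 * (norm (mu x))^2 - c2 * IG x"
          by (rule IGineq) (use x t in auto)
        ultimately show "2 * IG x * IG2 x - IG1 x ^ 2 / 2 \<ge> 2 * \<epsilon>^2 - c2 * IG x" by linarith
      qed
    qed
    moreover have "eventually (\<lambda>t. t \<in> {max s7 s2<..<T}) (at_left T)"
      by (rule eventually_at_left_real) (use s7 s2 in auto)
    ultimately show "eventually (\<lambda>t. dist (mu t) 0 < e) (at_left T)"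
      by (auto elim!: eventually_mono simp: \<epsilon>_def)
  qed
  have mub: "norm (mu t) \<le> C * (T - t) powr (7/3)" if t: "t \<in> {s2<..<T}" for t
  proof -
    have lim: "((\<lambda>t'. norm (mu t') + C * (T - t) powr (7/3)) \<longlongrightarrow> 0 + C * (T - t) powr (7/3)) (at_left T)"
      by (intro tendsto_add tendsto_const tendsto_norm_zero mu_lim)
    have "eventually (\<lambda>t'. t' \<in> {t<..<T}) (at_left T)"
      by (rule eventually_at_left_real) (use t in auto)
    then have evb: "eventually (\<lambda>t'. norm (mu t) \<le> norm (mu t') + C * (T - t) powr (7/3)) (at_left T)"
    proof (rule eventually_mono)
      fix t' assume t': "t' \<in> {t<..<T}"
      have "norm (mu t' - mu t) \<le> C * (T - t) powr (7/3)" by (rule mdb) (use t t' in auto)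
      moreover have "norm (mu t) \<le> norm (mu t') + norm (mu t' - mu t)"
        by (metis norm_minus_commute norm_triangle_sub)
      ultimately show "norm (mu t) \<le> norm (mu t') + C * (T - t) powr (7/3)" by linarith
    qed
    have "norm (mu t) \<le> 0 + C * (T - t) powr (7/3)"
      by (rule tendsto_lowerbound[OF lim evb]) simp
    then show ?thesis by simp
  qed
  show ?thesis
    by (rule exI[of _ s2], rule exI[of _ C]) (use s s2 C dmub mub in auto)
qed

end


lemma cross2_bb: "bounded_bilinear cross2"
proof -
  have "bilinear cross2"
    by (auto simp: bilinear_def cross2_def algebra_simps intro!: linearI)
  then show ?thesis by (simp add: bilinear_conv_bounded_bilinear)
qed

lemma cross2_I: "(x \<bullet> v)^2 + (norm (cross2 x v))^2 \<le> (norm x)^2 * (norm v)^2"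
proof -
  have "(x \<bullet> v)^2 + (norm (cross2 x v))^2 = (x\<bullet>x) * (v\<bullet>v)"
    by (simp add: cross2_def inner_vec_def sum_2 power2_eq_square algebra_simps)
  then show ?thesis by (simp add: power2_norm_eq_inner)
qed

lemma cross3_bb: "bounded_bilinear cross3"
  using bilinear_cross by (simp add: bilinear_conv_bounded_bilinear)

lemma cross3_I: "(x \<bullet> v)^2 + (norm (cross3 x v))^2 \<le> (norm x)^2 * (norm v)^2"
  using norm_cross_dot[of x v] by (simp add: power_mult_distrib)

lemma generic:
  fixes q qd :: "real \<Rightarrow> nat \<Rightarrow> 'a::euclidean_space" and cr :: "'a \<Rightarrow> 'a \<Rightarrow> 'b::real_inner"
  assumes set: "nb_cluster_setting n m t0 T q qd G"
    and bb: "bounded_bilinear cr"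
    and crI: "\<And>x v. (x \<bullet> v)^2 + (norm (cr x v))^2 \<le> (norm x)^2 * (norm v)^2"
  shows "(\<lambda>t. norm (ang_mom0 cr m G q qd t)) \<in> O[at_left T](\<lambda>t. \<bar>T - t\<bar> powr (7/3)) \<and>
      (\<exists>dmu. (\<forall>t\<in>{t0<..<T}. (ang_mom0 cr m G q qd has_vector_derivative dmu t) (at t)) \<and>
             (\<lambda>t. norm (dmu t)) \<in> O[at_left T](\<lambda>t. \<bar>T - t\<bar> powr (4/3)))"
proof -
  note S = set[unfolded nb_cluster_setting_def]
  note S2 = S[THEN conjunct2]
  have mp: "\<forall>i\<in>{1..n}. m i > 0" by (rule S2[THEN conjunct1])
  note S3 = S2[THEN conjunct2]
  have t0T: "t0 < T" by (rule S3[THEN conjunct1])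
  note S4 = S3[THEN conjunct2]
  have dst: "\<forall>t\<in>{t0..<T}. \<forall>i\<in>{1..n}. \<forall>j\<in>{1..n}. i \<noteq> j \<longrightarrow> q t i \<noteq> q t j" by (rule S4[THEN conjunct1])
  note S5 = S4[THEN conjunct2]
  note exq = S5[THEN conjunct1]
  note S6 = S5[THEN conjunct2]
  have exL: "\<forall>i\<in>{1..n}. \<exists>L. ((\<lambda>t. q t i) \<longlongrightarrow> L) (at_left T)" by (rule S6[THEN conjunct1])
  note S7 = S6[THEN conjunct2]
  have GN: "G \<subseteq> {1..n}" by (rule S7[THEN conjunct1])
  note S8 = S7[THEN conjunct2]
  have cG: "card G \<ge> 2" by (rule S8[THEN conjunct1])
  note exLG = S8[THEN conjunct2]
  obtain qdd where qdd: "\<forall>t\<in>{t0..<T}. \<forall>i\<in>{1..n}.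
        ((\<lambda>s. q s i) has_vector_derivative qd t i) (at t within {t0..<T}) \<and>
        ((\<lambda>s. qd s i) has_vector_derivative qdd t i) (at t within {t0..<T}) \<and>
        ((\<lambda>x. nbU n m ((q t)(i := x))) has_derivative (\<lambda>h. (m i *\<^sub>R qdd t i) \<bullet> h)) (at (q t i))"
    using exq by (elim exE) 
  obtain L where L: "\<forall>i\<in>{1..n}. ((\<lambda>t. q t i) \<longlongrightarrow> L i) (at_left T)"
    using bchoice[OF exL] by (elim exE)
  obtain LG where LG: "\<forall>i\<in>G. ((\<lambda>t. q t i) \<longlongrightarrow> LG) (at_left T)"
    "\<forall>j\<in>{1..n} - G. \<not> ((\<lambda>t. q t j) \<longlongrightarrow> LG) (at_left T)"
    using exLG by (elim exE conjE)
  interpret nbc n m t0 T q qd qdd G L LG cr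
  proof (unfold_locales)
    show "\<And>i. i \<in> {1..n} \<Longrightarrow> 0 < m i" using mp by blast
    show "t0 < T" by (rule t0T)
    show "\<And>t i j. t \<in> {t0..<T} \<Longrightarrow> i \<in> {1..n} \<Longrightarrow> j \<in> {1..n} \<Longrightarrow> i \<noteq> j \<Longrightarrow> q t i \<noteq> q t j"
      using dst by blast
    show "\<And>t i. t \<in> {t0..<T} \<Longrightarrow> i \<in> {1..n} \<Longrightarrow> ((\<lambda>s. q s i) has_vector_derivative qd t i) (at t within {t0..<T})"
      using qdd by blast
    show "\<And>t i. t \<in> {t0..<T} \<Longrightarrow> i \<in> {1..n} \<Longrightarrow> ((\<lambda>s. qd s i) has_vector_derivative qdd t i) (at t within {t0..<T})"
      using qdd by blast
    show "\<And>t i. t \<in> {t0..<T} \<Longrightarrow> i \<in> {1..n} \<Longrightarrow>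
        ((\<lambda>x. nbU n m ((q t)(i := x))) has_derivative (\<lambda>h. (m i *\<^sub>R qdd t i) \<bullet> h)) (at (q t i))"
      using qdd by blast
    show "\<And>i. i \<in> {1..n} \<Longrightarrow> ((\<lambda>t. q t i) \<longlongrightarrow> L i) (at_left T)" using L by blast
    show "G \<subseteq> {1..n}" by (rule GN)
    show "2 \<le> card G" by (rule cG)
    show "\<And>i. i \<in> G \<Longrightarrow> L i = LG"
    proof -
      fix i assume i: "i \<in> G"
      show "L i = LG"
      proof (rule tendsto_unique[OF trivial_limit_at_left_real])
        show "((\<lambda>t. q t i) \<longlongrightarrow> L i) (at_left T)" using L i GN by blast
        show "((\<lambda>t. q t i) \<longlongrightarrow> LG) (at_left T)" using LG(1) i by blast
      qed
    qed
    show "\<And>j. j \<in> {1..n} \<Longrightarrow> j \<notin> G \<Longrightarrow> L j \<noteq> LG"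
    proof -
      fix j assume j: "j \<in> {1..n}" "j \<notin> G"
      show "L j \<noteq> LG"
      proof
        assume "L j = LG"
        then have "((\<lambda>t. q t j) \<longlongrightarrow> LG) (at_left T)" using L j by auto
        then show False using LG(2) j by blast
      qed
    qed
  qed (use crI bounded_bilinear.bounded[OF bb] in \<open>auto simp: bounded_bilinear.add_left[OF bb]
      bounded_bilinear.add_right[OF bb] bounded_bilinear.scaleR_left[OF bb] bounded_bilinear.scaleR_right[OF bb]\<close>)
  obtain s C where sC: "t0 \<le> s" "s < T" "C \<ge> 0"
    and bd: "\<forall>t\<in>{s<..<T}. norm (dmu t) \<le> C * (T - t) powr (4/3) \<and> norm (mu t) \<le> C * (T - t) powr (7/3)"
    using cluster_main by blast
  have ev: "eventually (\<lambda>t. t \<in> {s<..<T}) (at_left T)" by (rule eventually_at_left_real[OF sC(2)])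
  have muO: "(\<lambda>t. norm (ang_mom0 cr m G q qd t)) \<in> O[at_left T](\<lambda>t. \<bar>T - t\<bar> powr (7/3))"
  proof (rule bigoI)
    show "eventually (\<lambda>t. norm (norm (ang_mom0 cr m G q qd t)) \<le> C * norm (\<bar>T - t\<bar> powr (7/3))) (at_left T)"
      using ev by (rule eventually_mono) (use bd in \<open>auto simp: mu_def\<close>)
  qed
  have dmuO: "(\<lambda>t. norm (dmu t)) \<in> O[at_left T](\<lambda>t. \<bar>T - t\<bar> powr (4/3))"
  proof (rule bigoI)
    show "eventually (\<lambda>t. norm (norm (dmu t)) \<le> C * norm (\<bar>T - t\<bar> powr (4/3))) (at_left T)"
      using ev by (rule eventually_mono) (use bd in auto)
  qed
  have der: "\<forall>t\<in>{t0<..<T}. (ang_mom0 cr m G q qd has_vector_derivative dmu t) (at t)"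
    using dmu_deriv by (simp add: mu_def[abs_def])
  show ?thesis using muO dmuO der by blast
qed

theorem theoremB5:
  shows
  "(\<forall>n m t0 T (q :: real \<Rightarrow> nat \<Rightarrow> real^2) qd G.
      nb_cluster_setting n m t0 T q qd G \<longrightarrow>
      (\<lambda>t. norm (ang_mom0 cross2 m G q qd t)) \<in> O[at_left T](\<lambda>t. \<bar>T - t\<bar> powr (7/3)) \<and>
      (\<exists>dmu. (\<forall>t\<in>{t0<..<T}. (ang_mom0 cross2 m G q qd has_vector_derivative dmu t) (at t)) \<and>
             (\<lambda>t. norm (dmu t)) \<in> O[at_left T](\<lambda>t. \<bar>T - t\<bar> powr (4/3)))) \<and>
   (\<forall>n m t0 T (q :: real \<Rightarrow> nat \<Rightarrow> real^3) qd G.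
      nb_cluster_setting n m t0 T q qd G \<longrightarrow>
      (\<lambda>t. norm (ang_mom0 cross3 m G q qd t)) \<in> O[at_left T](\<lambda>t. \<bar>T - t\<bar> powr (7/3)) \<and>
      (\<exists>dmu. (\<forall>t\<in>{t0<..<T}. (ang_mom0 cross3 m G q qd has_vector_derivative dmu t) (at t)) \<and>
             (\<lambda>t. norm (dmu t)) \<in> O[at_left T](\<lambda>t. \<bar>T - t\<bar> powr (4/3))))"
  using generic[OF _ cross2_bb cross2_I] generic[OF _ cross3_bb cross3_I] by blast


end
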